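(* Under the standing setup (C1)–(C4), there is a constant $C>0$ such that for all $n\in\mathbb N$, $$E\Big(\sum_{k=0}^nR(k)\Big)^2\le Cn,\qquad\text{where } R(k)=\prod_{j=1}^\ell X_j(q_j(k))-\prod_{j=1}^\ell a_j .$$
   Context: Standing setup. $(\Omega,\mathcal F,P)$ is a probability space, $\ell\ge1$, $X_1,\dots,X_\ell$ are real stationary processes $X_j(n)$, $n\ge0$, with $|X_j(n)|\le D$ a.s. $\{\mathcal F_{kl}\}$ is a family of sub-$\sigma$-algebras, $\mathcal F_{kl}\subset\mathcal F_{k'l'}$ for $k'\le k$, $l'\ge l$. $\alpha(n)=\sup_{k\ge0}\sup_{A\in\mathcal F_{-\infty,k},B\in\mathcal F_{k+n,\infty}}|P(A\cap B)-P(A)P(B)|$, $\beta_j(n)=\sup_{m\ge0}E|X_j(m)-E(X_j(m)\mid\mathcal F_{m-n,m+n})|$. (C1): $\alpha(n)+\max_j\beta_j(n)\le\kappa^{-1}e^{-\kappa n}$ for some $\kappa>0$ and all $n$. (C2): $q_1(n)=rn+p$ with integers $r>0,p\ge0$. There exist $\gamma\in(0,1)$, $n_0>1$ such that for $n\ge n_0$: (C3) $q_j(n+1)\ge q_j(n)+n^\gamma$ for $j=2,\dots,\ell$; (C4) $q_{j+1}([n^{1-\gamma}])\ge q_j(n)n^\gamma$ for $j=1,\dots,\ell-1$. All $q_j$ take nonnegative integer values on nonnegative integers. $a_j=EX_j(0)$. *)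

theory Defs
  imports "HOL-Probability.Probability"
begin

definition ZInf :: "ereal set" where
  "ZInf = {-\<infinity>, \<infinity>} \<union> range (\<lambda>z::int. ereal (real_of_int z))"

definition stationary :: "'a measure \<Rightarrow> (nat \<Rightarrow> 'a \<Rightarrow> real) \<Rightarrow> bool" where
  "stationary M Y \<longleftrightarrow>
     (\<forall>m::nat. distr M (\<Pi>\<^sub>M i\<in>(UNIV::nat set). (borel::real measure)) (\<lambda>\<omega> i. Y (i + m) \<omega>)
             = distr M (\<Pi>\<^sub>M i\<in>(UNIV::nat set). (borel::real measure)) (\<lambda>\<omega> i. Y i \<omega>))"

definition mixing_alpha :: "'a measure \<Rightarrow> (ereal \<Rightarrow> ereal \<Rightarrow> 'a measure) \<Rightarrow> nat \<Rightarrow> real" where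
  "mixing_alpha M F n = Sup {\<bar>measure M (A \<inter> B) - measure M A * measure M B\<bar> | k A B.
       A \<in> sets (F (-\<infinity>) (ereal (real (k::nat)))) \<and> B \<in> sets (F (ereal (real k + real n)) \<infinity>)}"

definition approx_beta :: "'a measure \<Rightarrow> (ereal \<Rightarrow> ereal \<Rightarrow> 'a measure) \<Rightarrow> (nat \<Rightarrow> 'a \<Rightarrow> real) \<Rightarrow> nat \<Rightarrow> real" where
  "approx_beta M F Y n = Sup (range (\<lambda>m::nat.
       (\<integral>\<omega>. \<bar>Y m \<omega> - real_cond_exp M (F (ereal (real m - real n)) (ereal (real m + real n))) (Y m) \<omega>\<bar> \<partial>M)))"

end

theory Submission
  imports Defs
begin

lemma card_le_floor:
  fixes y :: real assumes "0 \<le> y" "y \<le> real N"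
  shows "real (card {i\<in>{1..N}. real i \<le> y}) = of_int \<lfloor>y\<rfloor>"
proof -
  have 1: "real i \<le> y \<longleftrightarrow> i \<le> nat \<lfloor>y\<rfloor>" for i
  proof -
    have "real i \<le> y \<longleftrightarrow> int i \<le> \<lfloor>y\<rfloor>" by (metis le_floor_iff of_int_of_nat_eq)
    also have "\<dots> \<longleftrightarrow> i \<le> nat \<lfloor>y\<rfloor>" using assms by (simp add: le_nat_iff)
    finally show ?thesis .
  qed
  have 2: "nat \<lfloor>y\<rfloor> \<le> N" using assms 1[of "nat \<lfloor>y\<rfloor>"] by linarith
  have "{i\<in>{1..N}. real i \<le> y} = {i\<in>{1..N}. i \<le> nat \<lfloor>y\<rfloor>}"
    using 1 by blast
  also have "\<dots> = {1..nat \<lfloor>y\<rfloor>}" using 2 by auto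
  finally have 3: "{i\<in>{1..N}. real i \<le> y} = {1..nat \<lfloor>y\<rfloor>}" .
  show ?thesis unfolding 3 using assms by simp
qed

definition disc :: "nat \<Rightarrow> real \<Rightarrow> real" where
  "disc N u = (\<Sum>i\<in>{1..N}. indicator {x. real i / real N \<le> x} u) / real N"

lemma disc_eq:
  fixes u :: real assumes "0 \<le> u" "u \<le> 1" "N > 0"
  shows "disc N u = of_int \<lfloor>real N * u\<rfloor> / real N"
proof -
  have "(\<Sum>i\<in>{1..N}. indicator {x. real i / real N \<le> x} u :: real)
        = (\<Sum>i\<in>{1..N}. if real i \<le> real N * u then 1 else 0)"
    using assms by (intro sum.cong) (auto simp: indicator_def field_simps)
  also have "\<dots> = real (card {i\<in>{1..N}. real i \<le> real N * u})"
    by (simp add: sum.If_cases) (rule arg_cong[where f=card], auto)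
  also have "\<dots> = of_int \<lfloor>real N * u\<rfloor>"
    using assms by (intro card_le_floor) (auto simp: mult_left_le)
  finally show ?thesis unfolding disc_def by simp
qed

lemma disc_bounds:
  fixes u :: real assumes "0 \<le> u" "u \<le> 1" "N > 0"
  shows "u - 1 / real N \<le> disc N u" "disc N u \<le> u" "0 \<le> disc N u" "disc N u \<le> 1"
proof -
  have N: "real N > 0" using assms by simp
  have f1: "real N * u - 1 \<le> of_int \<lfloor>real N * u\<rfloor>" by linarith
  have f2: "of_int \<lfloor>real N * u\<rfloor> \<le> real N * u" by linarith
  have "0 \<le> real N * u" using assms by simp
  then have f3: "0 \<le> (of_int \<lfloor>real N * u\<rfloor> :: real)" by simp
  have "u - 1 / real N = (real N * u - 1) / real N" using N by (simp add: field_simps)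
  also have "\<dots> \<le> of_int \<lfloor>real N * u\<rfloor> / real N" using f1 N by (intro divide_right_mono) auto
  finally show "u - 1 / real N \<le> disc N u" unfolding disc_eq[OF assms] .
  have "of_int \<lfloor>real N * u\<rfloor> / real N \<le> real N * u / real N" using f2 N by (intro divide_right_mono) auto
  also have "\<dots> = u" using N by simp
  finally show du: "disc N u \<le> u" unfolding disc_eq[OF assms] .
  show "0 \<le> disc N u" using N f3 unfolding disc_eq[OF assms] by simp
  show "disc N u \<le> 1" using du assms by linarith
qed

lemma bnd_int:
  fixes f :: "'a \<Rightarrow> real"
  assumes "prob_space M" "f \<in> borel_measurable M" "\<And>x. x \<in> space M \<Longrightarrow> \<bar>f x\<bar> \<le> c"
  shows "integrable M f"
proof -
  interpret prob_space M by fact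
  show ?thesis using assms by (intro integrable_const_bound[where B=c]) auto
qed

lemma abs_int_le:
  fixes f :: "'a \<Rightarrow> real"
  assumes "prob_space M" "integrable M f" "\<And>x. x \<in> space M \<Longrightarrow> \<bar>f x\<bar> \<le> c"
  shows "\<bar>\<integral>x. f x \<partial>M\<bar> \<le> c"
proof -
  interpret prob_space M by fact
  have "\<bar>\<integral>x. f x \<partial>M\<bar> \<le> (\<integral>x. \<bar>f x\<bar> \<partial>M)" by (rule integral_abs_bound)
  also have "\<dots> \<le> (\<integral>x. c \<partial>M)"
    using assms by (intro integral_mono) auto
  also have "\<dots> = c" by (simp add: prob_space)
  finally show ?thesis .
qed

lemma cov_disc:
  assumes M: "prob_space M" and sA: "subalgebra M A" and sB: "subalgebra M B"
  and mix: "\<And>a b. a \<in> sets A \<Longrightarrow> b \<in> sets B \<Longrightarrow> \<bar>measure M (a\<inter>b) - measure M a * measure M b\<bar> \<le> \<alpha>"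
  and U: "U \<in> borel_measurable A" and V: "V \<in> borel_measurable B" and N: "N > 0"
  shows "\<bar>(\<integral>x. disc N (U x) * disc N (V x) \<partial>M) - (\<integral>x. disc N (U x) \<partial>M) * (\<integral>x. disc N (V x) \<partial>M)\<bar> \<le> \<alpha>"
proof -
  interpret prob_space M by fact
  define a where "a i = {x\<in>space M. real i / real N \<le> U x}" for i
  define b where "b i = {x\<in>space M. real i / real N \<le> V x}" for i
  have spA: "space A = space M" and spB: "space B = space M" using sA sB by (auto simp: subalgebra_def)
  have aA: "a i \<in> sets A" for i unfolding a_def spA[symmetric] using U by measurable
  have bB: "b i \<in> sets B" for i unfolding b_def spB[symmetric] using V by measurable
  have aM: "a i \<in> sets M" for i using aA sA by (auto simp: subalgebra_def)
  have bM: "b i \<in> sets M" for i using bB sB by (auto simp: subalgebra_def)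
  have ia: "integrable M (indicator (a i) :: 'a \<Rightarrow> real)" for i
    using aM by (intro integrable_real_indicator) (auto simp: less_top[symmetric])
  have ib: "integrable M (indicator (b i) :: 'a \<Rightarrow> real)" for i
    using bM by (intro integrable_real_indicator) (auto simp: less_top[symmetric])
  have iab: "integrable M (indicator (a i \<inter> b j) :: 'a \<Rightarrow> real)" for i j
    using aM bM by (intro integrable_real_indicator) (auto simp: less_top[symmetric])
  have aS: "a i \<inter> space M = a i" "b i \<inter> space M = b i" "a i \<inter> b j \<inter> space M = a i \<inter> b j" for i j
    by (auto simp: a_def b_def)
  have ma: "(\<integral>x. indicator (a i) x \<partial>M) = measure M (a i)" for i
    using aM by (simp add: Int_absorb2 sets.sets_into_space)
  have mb: "(\<integral>x. indicator (b i) x \<partial>M) = measure M (b i)" for i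
    using bM by (simp add: Int_absorb2 sets.sets_into_space)
  have mab: "(\<integral>x. indicator (a i \<inter> b j) x \<partial>M) = measure M (a i \<inter> b j)" for i j
    using aM bM by (simp add: Int_absorb2 sets.sets_into_space sets.Int)
  have dU: "disc N (U x) = (\<Sum>i\<in>{1..N}. indicator (a i) x) / real N" if "x \<in> space M" for x
    using that unfolding disc_def a_def by (simp add: indicator_def)
  have dV: "disc N (V x) = (\<Sum>i\<in>{1..N}. indicator (b i) x) / real N" if "x \<in> space M" for x
    using that unfolding disc_def b_def by (simp add: indicator_def)
  have dUV: "disc N (U x) * disc N (V x) = (\<Sum>i\<in>{1..N}. \<Sum>j\<in>{1..N}. indicator (a i \<inter> b j) x) / (real N * real N)"
    if "x \<in> space M" for x
    unfolding dU[OF that] dV[OF that] by (simp add: sum_product indicator_inter_arith)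
  have I1: "(\<integral>x. disc N (U x) \<partial>M) = (\<Sum>i\<in>{1..N}. measure M (a i)) / real N"
  proof -
    have "(\<integral>x. disc N (U x) \<partial>M) = (\<integral>x. (\<Sum>i\<in>{1..N}. indicator (a i) x) / real N \<partial>M)"
      by (intro Bochner_Integration.integral_cong) (auto simp: dU)
    also have "\<dots> = (\<Sum>i\<in>{1..N}. measure M (a i)) / real N"
      by (simp add: Bochner_Integration.integral_sum[OF ia] ma ia aS)
    finally show ?thesis .
  qed
  have I2: "(\<integral>x. disc N (V x) \<partial>M) = (\<Sum>i\<in>{1..N}. measure M (b i)) / real N"
  proof -
    have "(\<integral>x. disc N (V x) \<partial>M) = (\<integral>x. (\<Sum>i\<in>{1..N}. indicator (b i) x) / real N \<partial>M)"
      by (intro Bochner_Integration.integral_cong) (auto simp: dV)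
    also have "\<dots> = (\<Sum>i\<in>{1..N}. measure M (b i)) / real N"
      by (simp add: Bochner_Integration.integral_sum[OF ib] mb ib aS)
    finally show ?thesis .
  qed
  have I3: "(\<integral>x. disc N (U x) * disc N (V x) \<partial>M) = (\<Sum>i\<in>{1..N}. \<Sum>j\<in>{1..N}. measure M (a i \<inter> b j)) / (real N * real N)"
  proof -
    have "(\<integral>x. disc N (U x) * disc N (V x) \<partial>M) = (\<integral>x. (\<Sum>i\<in>{1..N}. \<Sum>j\<in>{1..N}. indicator (a i \<inter> b j) x) / (real N * real N) \<partial>M)"
      by (intro Bochner_Integration.integral_cong) (auto simp: dUV)
    also have "\<dots> = (\<Sum>i\<in>{1..N}. \<Sum>j\<in>{1..N}. measure M (a i \<inter> b j)) / (real N * real N)"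
      by (simp add: Bochner_Integration.integral_sum iab mab aS)
    finally show ?thesis .
  qed
  have "(\<integral>x. disc N (U x) * disc N (V x) \<partial>M) - (\<integral>x. disc N (U x) \<partial>M) * (\<integral>x. disc N (V x) \<partial>M)
     = (\<Sum>i\<in>{1..N}. \<Sum>j\<in>{1..N}. measure M (a i \<inter> b j) - measure M (a i) * measure M (b j)) / (real N * real N)"
    unfolding I1 I2 I3 by (simp add: sum_subtractf diff_divide_distrib sum_product[symmetric])
  also have "\<bar>\<dots>\<bar> \<le> (\<Sum>i\<in>{1..N}. \<Sum>j\<in>{1..N}. \<alpha>) / (real N * real N)"
  proof -
    have "\<bar>\<Sum>i\<in>{1..N}. \<Sum>j\<in>{1..N}. measure M (a i \<inter> b j) - measure M (a i) * measure M (b j)\<bar> \<le> (\<Sum>i\<in>{1..N}. \<Sum>j\<in>{1..N}. \<alpha>)"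
      by (intro order.trans[OF sum_abs] sum_mono order.trans[OF sum_abs] mix aA bB)
    then show ?thesis using N unfolding abs_divide by (simp add: pos_divide_le_eq mult_ac)
  qed
  also have "\<dots> = \<alpha>" using N by simp
  finally show ?thesis .
qed

lemma absmul: fixes x y :: real shows "\<bar>x\<bar> \<le> a \<Longrightarrow> \<bar>y\<bar> \<le> b \<Longrightarrow> \<bar>x * y\<bar> \<le> a * b"
  by (metis abs_ge_zero abs_mult mult_mono order.trans)

lemma cov01:
  assumes M: "prob_space M" and sA: "subalgebra M A" and sB: "subalgebra M B"
  and mix: "\<And>a b. a \<in> sets A \<Longrightarrow> b \<in> sets B \<Longrightarrow> \<bar>measure M (a\<inter>b) - measure M a * measure M b\<bar> \<le> \<alpha>"
  and U: "U \<in> borel_measurable A" "\<And>x. 0 \<le> U x" "\<And>x. U x \<le> 1"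
  and V: "V \<in> borel_measurable B" "\<And>x. 0 \<le> V x" "\<And>x. V x \<le> 1"
  shows "\<bar>(\<integral>x. U x * V x \<partial>M) - (\<integral>x. U x \<partial>M) * (\<integral>x. V x \<partial>M)\<bar> \<le> \<alpha>"
proof -
  interpret prob_space M by fact
  have UM: "U \<in> borel_measurable M" using measurable_from_subalg[OF sA U(1)] .
  have VM: "V \<in> borel_measurable M" using measurable_from_subalg[OF sB V(1)] .
  let ?C = "(\<integral>x. U x * V x \<partial>M) - (\<integral>x. U x \<partial>M) * (\<integral>x. V x \<partial>M)"
  have key: "\<bar>?C\<bar> \<le> \<alpha> + 4 / real N" if N: "N > 0" for N
  proof -
    let ?u = "\<lambda>x. disc N (U x)" and ?v = "\<lambda>x. disc N (V x)"
    have dm: "disc N \<in> borel_measurable borel" unfolding disc_def by measurable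
    have uM: "?u \<in> borel_measurable M" using dm UM by measurable
    have vM: "?v \<in> borel_measurable M" using dm VM by measurable
    note db = disc_bounds[OF _ _ N]
    have iU: "integrable M U" using UM U by (intro bnd_int[OF M, where c=1]) auto
    have iV: "integrable M V" using VM V by (intro bnd_int[OF M, where c=1]) auto
    have iu: "integrable M ?u" using uM U db by (intro bnd_int[OF M, where c=1]) auto
    have iv: "integrable M ?v" using vM V db by (intro bnd_int[OF M, where c=1]) auto
    have iUV: "integrable M (\<lambda>x. U x * V x)" using UM VM U V
      by (intro bnd_int[OF M, where c=1]) (auto simp: abs_mult intro: mult_le_one)
    have iuv: "integrable M (\<lambda>x. ?u x * ?v x)" using uM vM U V db
      by (intro bnd_int[OF M, where c=1]) (auto simp: abs_mult intro!: mult_le_one)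
    have pu: "\<bar>U x - ?u x\<bar> \<le> 1 / real N" for x using db[of "U x"] U by auto
    have pv: "\<bar>V x - ?v x\<bar> \<le> 1 / real N" for x using db[of "V x"] V by auto
    have pw1: "\<bar>U x * V x - ?u x * ?v x\<bar> \<le> 2 / real N" for x
    proof -
      have a1: "\<bar>U x - ?u x\<bar> \<le> 1 / real N" using db[of "U x"] U by auto
      have a2: "\<bar>V x - ?v x\<bar> \<le> 1 / real N" using db[of "V x"] V by auto
      have "U x * V x - ?u x * ?v x = (U x - ?u x) * V x + ?u x * (V x - ?v x)" by (simp add: algebra_simps)
      also have "\<bar>\<dots>\<bar> \<le> \<bar>U x - ?u x\<bar> * \<bar>V x\<bar> + \<bar>?u x\<bar> * \<bar>V x - ?v x\<bar>"
        by (metis abs_mult abs_triangle_ineq)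
      also have "\<dots> \<le> 1 / real N * 1 + 1 * (1 / real N)"
        using a1 a2 U V db[of "U x"] by (intro add_mono mult_mono) auto
      finally show ?thesis by simp
    qed
    have e1: "\<bar>(\<integral>x. U x * V x \<partial>M) - (\<integral>x. ?u x * ?v x \<partial>M)\<bar> \<le> 2 / real N"
    proof -
      have "(\<integral>x. U x * V x \<partial>M) - (\<integral>x. ?u x * ?v x \<partial>M) = (\<integral>x. U x * V x - ?u x * ?v x \<partial>M)"
        using iUV iuv by simp
      also have "\<bar>\<dots>\<bar> \<le> 2 / real N" using iUV iuv pw1 by (intro abs_int_le[OF M]) auto
      finally show ?thesis .
    qed
    have e2: "\<bar>(\<integral>x. U x \<partial>M) - (\<integral>x. ?u x \<partial>M)\<bar> \<le> 1 / real N"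
    proof -
      have "(\<integral>x. U x \<partial>M) - (\<integral>x. ?u x \<partial>M) = (\<integral>x. U x - ?u x \<partial>M)" using iU iu by simp
      also have "\<bar>\<dots>\<bar> \<le> 1 / real N" using iU iu pu by (intro abs_int_le[OF M]) auto
      finally show ?thesis .
    qed
    have e3: "\<bar>(\<integral>x. V x \<partial>M) - (\<integral>x. ?v x \<partial>M)\<bar> \<le> 1 / real N"
    proof -
      have "(\<integral>x. V x \<partial>M) - (\<integral>x. ?v x \<partial>M) = (\<integral>x. V x - ?v x \<partial>M)" using iV iv by simp
      also have "\<bar>\<dots>\<bar> \<le> 1 / real N" using iV iv pv by (intro abs_int_le[OF M]) auto
      finally show ?thesis .
    qed
    have bV: "\<bar>\<integral>x. V x \<partial>M\<bar> \<le> 1" using iV V by (intro abs_int_le[OF M]) auto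
    have bu: "\<bar>\<integral>x. ?u x \<partial>M\<bar> \<le> 1" using iu U db by (intro abs_int_le[OF M]) auto
    have cd: "\<bar>(\<integral>x. ?u x * ?v x \<partial>M) - (\<integral>x. ?u x \<partial>M) * (\<integral>x. ?v x \<partial>M)\<bar> \<le> \<alpha>"
      by (rule cov_disc[OF M sA sB mix U(1) V(1) N])
    have "(\<integral>x. U x \<partial>M) * (\<integral>x. V x \<partial>M) - (\<integral>x. ?u x \<partial>M) * (\<integral>x. ?v x \<partial>M)
       = ((\<integral>x. U x \<partial>M) - (\<integral>x. ?u x \<partial>M)) * (\<integral>x. V x \<partial>M)
         + (\<integral>x. ?u x \<partial>M) * ((\<integral>x. V x \<partial>M) - (\<integral>x. ?v x \<partial>M))" by (simp add: algebra_simps)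
    also have "\<bar>\<dots>\<bar> \<le> 1 / real N * 1 + 1 * (1 / real N)"
      by (intro order.trans[OF abs_triangle_ineq] add_mono absmul e2 e3 bV bu)
    finally have e4: "\<bar>(\<integral>x. U x \<partial>M) * (\<integral>x. V x \<partial>M) - (\<integral>x. ?u x \<partial>M) * (\<integral>x. ?v x \<partial>M)\<bar> \<le> 2 / real N"
      by simp
    show ?thesis using e1 e4 cd by linarith
  qed
  show ?thesis
  proof (rule ccontr)
    assume "\<not> \<bar>?C\<bar> \<le> \<alpha>"
    then have pos: "\<bar>?C\<bar> - \<alpha> > 0" by simp
    obtain N :: nat where N: "4 / (\<bar>?C\<bar> - \<alpha>) < real N" using reals_Archimedean2 by blast
    then have "N > 0" using pos by (metis divide_pos_pos gr0I less_le_not_le of_nat_0 zero_less_numeral)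
    have "4 < real N * (\<bar>?C\<bar> - \<alpha>)" using N pos by (simp add: pos_divide_less_eq mult.commute)
    then have "4 / real N < \<bar>?C\<bar> - \<alpha>" using \<open>N > 0\<close> by (simp add: divide_less_eq mult.commute)
    then show False using key[OF \<open>N > 0\<close>] by linarith
  qed
qed

lemma cov_bnd:
  assumes M: "prob_space M" and sA: "subalgebra M A" and sB: "subalgebra M B"
  and mix: "\<And>a b. a \<in> sets A \<Longrightarrow> b \<in> sets B \<Longrightarrow> \<bar>measure M (a\<inter>b) - measure M a * measure M b\<bar> \<le> \<alpha>"
  and U: "U \<in> borel_measurable A" "\<And>x. \<bar>U x\<bar> \<le> c1" and c1: "c1 > 0"
  and V: "V \<in> borel_measurable B" "\<And>x. \<bar>V x\<bar> \<le> c2" and c2: "c2 > 0"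
  shows "\<bar>(\<integral>x. U x * V x \<partial>M) - (\<integral>x. U x \<partial>M) * (\<integral>x. V x \<partial>M)\<bar> \<le> 4 * c1 * c2 * \<alpha>"
proof -
  interpret prob_space M by fact
  define U' where "U' x = (U x + c1) / (2 * c1)" for x
  define V' where "V' x = (V x + c2) / (2 * c2)" for x
  have U'm: "U' \<in> borel_measurable A" unfolding U'_def using U by measurable
  have V'm: "V' \<in> borel_measurable B" unfolding V'_def using V by measurable
  have U'b: "0 \<le> U' x" "U' x \<le> 1" for x unfolding U'_def using U(2)[of x] c1 by (auto simp: abs_le_iff field_simps)
  have V'b: "0 \<le> V' x" "V' x \<le> 1" for x unfolding V'_def using V(2)[of x] c2 by (auto simp: abs_le_iff field_simps)
  have C: "\<bar>(\<integral>x. U' x * V' x \<partial>M) - (\<integral>x. U' x \<partial>M) * (\<integral>x. V' x \<partial>M)\<bar> \<le> \<alpha>"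
    by (rule cov01[OF M sA sB mix U'm U'b V'm V'b])
  have UM: "U' \<in> borel_measurable M" using measurable_from_subalg[OF sA U'm] .
  have VM: "V' \<in> borel_measurable M" using measurable_from_subalg[OF sB V'm] .
  have iU: "integrable M U'" using UM U'b by (intro bnd_int[OF M, where c=1]) auto
  have iV: "integrable M V'" using VM V'b by (intro bnd_int[OF M, where c=1]) auto
  have iUV: "integrable M (\<lambda>x. U' x * V' x)" using UM VM U'b V'b
    by (intro bnd_int[OF M, where c=1]) (auto simp: abs_mult intro: mult_le_one)
  have Ue: "U x = 2 * c1 * U' x - c1" for x unfolding U'_def using c1 by (simp add: field_simps)
  have Ve: "V x = 2 * c2 * V' x - c2" for x unfolding V'_def using c2 by (simp add: field_simps)
  have e1: "(\<integral>x. U x \<partial>M) = 2 * c1 * (\<integral>x. U' x \<partial>M) - c1" unfolding Ue using iU by (simp add: prob_space)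
  have e2: "(\<integral>x. V x \<partial>M) = 2 * c2 * (\<integral>x. V' x \<partial>M) - c2" unfolding Ve using iV by (simp add: prob_space)
  have "(\<lambda>x. U x * V x) = (\<lambda>x. 4 * c1 * c2 * (U' x * V' x) - 2 * c1 * c2 * U' x - 2 * c1 * c2 * V' x + c1 * c2)"
    unfolding Ue Ve by (simp add: algebra_simps)
  then have e3: "(\<integral>x. U x * V x \<partial>M) = 4 * c1 * c2 * (\<integral>x. U' x * V' x \<partial>M) - 2 * c1 * c2 * (\<integral>x. U' x \<partial>M) - 2 * c1 * c2 * (\<integral>x. V' x \<partial>M) + c1 * c2"
    using iU iV iUV by (simp add: prob_space)
  have "(\<integral>x. U x * V x \<partial>M) - (\<integral>x. U x \<partial>M) * (\<integral>x. V x \<partial>M)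
      = 4 * c1 * c2 * ((\<integral>x. U' x * V' x \<partial>M) - (\<integral>x. U' x \<partial>M) * (\<integral>x. V' x \<partial>M))"
    unfolding e1 e2 e3 by (simp add: algebra_simps)
  also have "\<bar>\<dots>\<bar> \<le> 4 * c1 * c2 * \<alpha>" using C c1 c2 by (simp add: abs_mult)
  finally show ?thesis .
qed

lemma abs_int_le_AE:
  fixes f :: "'a \<Rightarrow> real"
  assumes "prob_space M" "AE x in M. \<bar>f x\<bar> \<le> c"
  shows "\<bar>\<integral>x. f x \<partial>M\<bar> \<le> c"
proof -
  interpret prob_space M by fact
  have c: "0 \<le> c" using assms(2) by (metis (mono_tags, lifting) AE_const abs_ge_zero eventually_mono order.trans)
  show ?thesis
  proof (cases "integrable M f")
    case True
    have "\<bar>\<integral>x. f x \<partial>M\<bar> \<le> (\<integral>x. \<bar>f x\<bar> \<partial>M)" by (rule integral_abs_bound)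
    also have "\<dots> \<le> (\<integral>x. c \<partial>M)" using assms True by (intro integral_mono_AE) auto
    also have "\<dots> = c" by (simp add: prob_space)
    finally show ?thesis .
  next
    case False then show ?thesis using c by (simp add: not_integrable_integral_eq)
  qed
qed

lemma bnd_int_AE:
  fixes f :: "'a \<Rightarrow> real"
  assumes "prob_space M" "f \<in> borel_measurable M" "AE x in M. \<bar>f x\<bar> \<le> c"
  shows "integrable M f"
proof -
  interpret prob_space M by fact
  show ?thesis using assms by (intro integrable_const_bound[where B=c]) auto
qed

lemma meas_prod_list:
  fixes f :: "'b \<Rightarrow> 'a \<Rightarrow> real"
  shows "(\<And>w. w \<in> set ws \<Longrightarrow> f w \<in> borel_measurable N) \<Longrightarrow> (\<lambda>x. prod_list (map (\<lambda>w. f w x) ws)) \<in> borel_measurable N"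
  by (induction ws) auto

lemma abs_prod_list_le:
  fixes f :: "'b \<Rightarrow> real"
  assumes "\<And>w. w \<in> set ws \<Longrightarrow> \<bar>f w\<bar> \<le> c"
  shows "\<bar>prod_list (map f ws)\<bar> \<le> c ^ length ws"
  using assms
proof (induction ws)
  case Nil then show ?case by simp
next
  case (Cons a ws)
  then have "\<bar>f a\<bar> \<le> c" "\<bar>prod_list (map f ws)\<bar> \<le> c ^ length ws" by auto
  then have "\<bar>f a * prod_list (map f ws)\<bar> \<le> c * c ^ length ws" by (rule absmul)
  then show ?case by simp
qed

lemma prod_list_diff:
  fixes zs :: "(real \<times> real) list"
  assumes "c \<ge> 1" "\<And>z. z \<in> set zs \<Longrightarrow> \<bar>fst z\<bar> \<le> c \<and> \<bar>snd z\<bar> \<le> c"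
  shows "\<bar>prod_list (map fst zs) - prod_list (map snd zs)\<bar> \<le> c ^ length zs * sum_list (map (\<lambda>z. \<bar>fst z - snd z\<bar>) zs)"
  using assms(2)
proof (induction zs)
  case Nil then show ?case by simp
next
  case (Cons z zs)
  let ?P = "prod_list (map fst zs)" and ?Q = "prod_list (map snd zs)"
  let ?S = "sum_list (map (\<lambda>z. \<bar>fst z - snd z\<bar>) zs)"
  have IH: "\<bar>?P - ?Q\<bar> \<le> c ^ length zs * ?S" using Cons by auto
  have zb: "\<bar>fst z\<bar> \<le> c" "\<bar>snd z\<bar> \<le> c" using Cons.prems by auto
  have Qb: "\<bar>?Q\<bar> \<le> c ^ length zs" using Cons.prems by (intro abs_prod_list_le) auto
  have S0: "0 \<le> ?S" by (induction zs) auto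
  have cn: "c ^ length zs \<le> c ^ Suc (length zs)" using assms(1) by simp
  have "fst z * ?P - snd z * ?Q = fst z * (?P - ?Q) + (fst z - snd z) * ?Q" by (simp add: algebra_simps)
  also have "\<bar>\<dots>\<bar> \<le> c * (c ^ length zs * ?S) + \<bar>fst z - snd z\<bar> * c ^ length zs"
    by (intro order.trans[OF abs_triangle_ineq] add_mono absmul zb IH Qb) auto
  also have "\<dots> \<le> c ^ Suc (length zs) * ?S + \<bar>fst z - snd z\<bar> * c ^ Suc (length zs)"
    using cn by (intro add_mono mult_left_mono) (auto simp: S0)
  finally show ?case by (simp add: algebra_simps)
qed

lemma prod_list_partition:
  fixes f :: "'b \<Rightarrow> real"
  shows "prod_list (map f xs) = prod_list (map f (filter P xs)) * prod_list (map f (filter (\<lambda>x. \<not> P x) xs))"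
  by (induction xs) (auto simp: algebra_simps)

definition clip :: "real \<Rightarrow> real \<Rightarrow> real" where "clip D x = max (- D) (min D x)"

lemma clip_bound: "0 \<le> D \<Longrightarrow> \<bar>clip D x\<bar> \<le> D" unfolding clip_def by auto
lemma clip_lip: "\<bar>y\<bar> \<le> D \<Longrightarrow> \<bar>y - clip D x\<bar> \<le> \<bar>y - x\<bar>" unfolding clip_def by auto
lemma clip_meas[measurable]: "clip D \<in> borel_measurable borel" unfolding clip_def by measurable

lemma geo_bound:
  fixes x :: real
  assumes "0 \<le> x" "x < 1" "finite A"
  shows "(\<Sum>i\<in>A. x ^ i) \<le> 1 / (1 - x)"
proof -
  define N where "N = Suc (Max (insert 0 A))"
  have sub: "A \<subseteq> {..<N}" unfolding N_def using assms(3) by (auto simp: le_imp_less_Suc)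
  have "(\<Sum>i\<in>A. x ^ i) \<le> (\<Sum>i<N. x ^ i)" using sub assms by (intro sum_mono2) auto
  also have "\<dots> = (1 - x ^ N) / (1 - x)" using assms by (simp add: sum_gp_strict)
  also have "\<dots> \<le> 1 / (1 - x)" using assms by (intro divide_right_mono) auto
  finally show ?thesis .
qed

lemma two_sided:
  fixes x :: real
  assumes "0 \<le> x" "x < 1" "finite S"
  shows "(\<Sum>k\<in>S. x ^ nat \<bar>int k - int m\<bar>) \<le> 2 / (1 - x)"
proof -
  define A1 where "A1 = {k\<in>S. k \<le> m}"
  define A2 where "A2 = {k\<in>S. m < k}"
  have fin: "finite A1" "finite A2" unfolding A1_def A2_def using assms by auto
  have "S = A1 \<union> A2" "A1 \<inter> A2 = {}" unfolding A1_def A2_def by auto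
  then have "(\<Sum>k\<in>S. x ^ nat \<bar>int k - int m\<bar>) = (\<Sum>k\<in>A1. x ^ nat \<bar>int k - int m\<bar>) + (\<Sum>k\<in>A2. x ^ nat \<bar>int k - int m\<bar>)"
    using fin by (simp add: sum.union_disjoint)
  also have "(\<Sum>k\<in>A1. x ^ nat \<bar>int k - int m\<bar>) = (\<Sum>k\<in>A1. x ^ (m - k))"
    by (intro sum.cong) (auto simp: A1_def nat_diff_distrib)
  also have "\<dots> = (\<Sum>d\<in>(\<lambda>k. m - k) ` A1. x ^ d)"
    by (rule sum.reindex[symmetric, unfolded o_def]) (auto simp: inj_on_def A1_def)
  also have "\<dots> \<le> 1 / (1 - x)" using assms fin by (intro geo_bound) auto
  also have "(\<Sum>k\<in>A2. x ^ nat \<bar>int k - int m\<bar>) = (\<Sum>k\<in>A2. x ^ (k - m))"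
    by (intro sum.cong) (auto simp: A2_def nat_diff_distrib)
  also have "\<dots> = (\<Sum>d\<in>(\<lambda>k. k - m) ` A2. x ^ d)"
    by (rule sum.reindex[symmetric, unfolded o_def]) (auto simp: inj_on_def A2_def)
  also have "\<dots> \<le> 1 / (1 - x)" using assms fin by (intro geo_bound) auto
  finally show ?thesis by simp
qed

lemma incr_sep:
  fixes f :: "nat \<Rightarrow> real"
  assumes inc: "\<And>k. k \<ge> N0 \<Longrightarrow> f k + 1 \<le> f (Suc k)" and "N0 \<le> k1" "k1 \<le> k2"
  shows "f k1 + real (k2 - k1) \<le> f k2"
  using assms(3)
proof (induction k2)
  case 0 then show ?case by simp
next
  case (Suc k2)
  show ?case
  proof (cases "k1 = Suc k2")
    case True then show ?thesis by simp
  next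
    case False
    then have "k1 \<le> k2" using Suc.prems by simp
    then have "f k1 + real (k2 - k1) \<le> f k2" by (rule Suc.IH)
    moreover have "f k2 + 1 \<le> f (Suc k2)" using inc \<open>k1 \<le> k2\<close> assms(2) by simp
    moreover have "real (Suc k2 - k1) = real (k2 - k1) + 1" using \<open>k1 \<le> k2\<close> by simp
    ultimately show ?thesis by linarith
  qed
qed

lemma exp_pow: "exp (- c * real d) = exp (- c) ^ d"
  by (metis exp_of_nat_mult mult.commute mult_minus_left)

lemma sep_sum:
  fixes f :: "nat \<Rightarrow> real"
  assumes c: "c > 0" and inc: "\<And>k. k \<ge> N0 \<Longrightarrow> f k + 1 \<le> f (Suc k)"
  shows "(\<Sum>k=0..n. exp (- c * \<bar>f k - t\<bar>)) \<le> real N0 + 2 / (1 - exp (- c / 2))"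
proof -
  define S where "S = {k\<in>{0..n}. N0 \<le> k}"
  define T where "T = {k\<in>{0..n}. k < N0}"
  have fin: "finite S" "finite T" unfolding S_def T_def by auto
  have "{0..n} = S \<union> T" "S \<inter> T = {}" unfolding S_def T_def by auto
  then have "(\<Sum>k=0..n. exp (- c * \<bar>f k - t\<bar>)) = (\<Sum>k\<in>S. exp (- c * \<bar>f k - t\<bar>)) + (\<Sum>k\<in>T. exp (- c * \<bar>f k - t\<bar>))"
    using fin by (simp add: sum.union_disjoint)
  also have "(\<Sum>k\<in>T. exp (- c * \<bar>f k - t\<bar>)) \<le> (\<Sum>k\<in>T. 1)" using c by (intro sum_mono) auto
  also have "\<dots> \<le> real N0"
  proof -
    have "T \<subseteq> {..<N0}" unfolding T_def by auto
    then have "card T \<le> N0" using card_mono[of "{..<N0}" T] by simp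
    then show ?thesis by simp
  qed
  also have "(\<Sum>k\<in>S. exp (- c * \<bar>f k - t\<bar>)) \<le> 2 / (1 - exp (- c / 2))"
  proof (cases "S = {}")
    case True then show ?thesis using c by simp
  next
    case False
    define ks where "ks = arg_min_on (\<lambda>k. \<bar>f k - t\<bar>) S"
    have ksS: "ks \<in> S" and ksmin: "\<And>k. k \<in> S \<Longrightarrow> \<bar>f ks - t\<bar> \<le> \<bar>f k - t\<bar>"
      using arg_min_if_finite[OF fin(1) False, of "\<lambda>k. \<bar>f k - t\<bar>"] unfolding ks_def by (auto simp: not_less)
    have key: "exp (- c * \<bar>f k - t\<bar>) \<le> exp (- c / 2) ^ nat \<bar>int k - int ks\<bar>" if "k \<in> S" for k
    proof -
      have kN: "N0 \<le> k" "N0 \<le> ks" using that ksS unfolding S_def by auto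
      have "real (nat \<bar>int k - int ks\<bar>) \<le> \<bar>f k - f ks\<bar>"
      proof (cases "ks \<le> k")
        case True
        then have "f ks + real (k - ks) \<le> f k" by (intro incr_sep[of N0 f, OF inc kN(2)]) auto
        then show ?thesis using True by (simp add: of_nat_diff)
      next
        case False
        then have "f k + real (ks - k) \<le> f ks" by (intro incr_sep[of N0 f, OF inc kN(1)]) auto
        then show ?thesis using False by (simp add: of_nat_diff)
      qed
      also have "\<dots> \<le> \<bar>f k - t\<bar> + \<bar>f ks - t\<bar>" by linarith
      also have "\<dots> \<le> 2 * \<bar>f k - t\<bar>"
      proof -
        have "x + y \<le> 2 * x" if "y \<le> x" for x y :: real using that by linarith
        then show ?thesis using ksmin[OF that] .
      qed
      finally have dd: "real (nat \<bar>int k - int ks\<bar>) \<le> 2 * \<bar>f k - t\<bar>" .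
      have "(c / 2) * real (nat \<bar>int k - int ks\<bar>) \<le> (c / 2) * (2 * \<bar>f k - t\<bar>)"
        using dd c by (intro mult_left_mono) auto
      then have "- c * \<bar>f k - t\<bar> \<le> - (c / 2) * real (nat \<bar>int k - int ks\<bar>)" by simp
      then have "exp (- c * \<bar>f k - t\<bar>) \<le> exp (- (c / 2) * real (nat \<bar>int k - int ks\<bar>))" by simp
      also have "\<dots> = exp (- c / 2) ^ nat \<bar>int k - int ks\<bar>" by (subst exp_pow) simp
      finally show ?thesis .
    qed
    have "(\<Sum>k\<in>S. exp (- c * \<bar>f k - t\<bar>)) \<le> (\<Sum>k\<in>S. exp (- c / 2) ^ nat \<bar>int k - int ks\<bar>)"
      using key by (intro sum_mono) auto
    also have "\<dots> \<le> 2 / (1 - exp (- c / 2))" using c fin by (intro two_sided) auto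
    finally show ?thesis .
  qed
  finally show ?thesis by simp
qed

locale S =
  fixes M :: "'a measure" and l :: nat and X :: "nat \<Rightarrow> nat \<Rightarrow> 'a \<Rightarrow> real" and D :: real
    and F :: "ereal \<Rightarrow> ereal \<Rightarrow> 'a measure" and q :: "nat \<Rightarrow> nat \<Rightarrow> nat"
    and \<kappa> :: real and r p :: nat and \<gamma> n0 :: real
  assumes M: "prob_space M" and l1: "l \<ge> 1"
    and Xm: "\<forall>j\<in>{1..l}. \<forall>n. X j n \<in> borel_measurable M"
    and stat: "\<forall>j\<in>{1..l}. stationary M (X j)"
    and Xb: "\<forall>j\<in>{1..l}. \<forall>n. AE \<omega> in M. \<bar>X j n \<omega>\<bar> \<le> D"
    and sub: "\<forall>k\<in>ZInf. \<forall>k'\<in>ZInf. subalgebra M (F k k')"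
    and mono: "\<forall>k\<in>ZInf. \<forall>k'\<in>ZInf. \<forall>m\<in>ZInf. \<forall>m'\<in>ZInf.
           m' \<le> k \<and> k' \<le> m \<longrightarrow> sets (F k k') \<subseteq> sets (F m' m)"
    and kpos: "\<kappa> > 0"
    and C1: "\<forall>n. mixing_alpha M F n + Max ((\<lambda>j. approx_beta M F (X j) n) ` {1..l})
              \<le> exp (- \<kappa> * real n) / \<kappa>"
    and r0: "r > 0" and q1: "\<forall>n. q 1 n = r * n + p"
    and g0: "0 < \<gamma>" and g1: "\<gamma> < 1" and n01: "n0 > 1"
    and C3: "\<forall>n. real n \<ge> n0 \<longrightarrow> (\<forall>j\<in>{2..l}. real (q j (n + 1)) \<ge> real (q j n) + real n powr \<gamma>)"
    and C4: "\<forall>n. real n \<ge> n0 \<longrightarrow> (\<forall>j\<in>{1..l-1}.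
           real (q (j + 1) (nat \<lfloor>real n powr (1 - \<gamma>)\<rfloor>)) \<ge> real (q j n) * real n powr \<gamma>)"
begin

lemma Dnn: "0 \<le> D"
proof -
  interpret prob_space M by (rule M)
  have "AE \<omega> in M. \<bar>X 1 0 \<omega>\<bar> \<le> D" using Xb l1 by auto
  then have "AE \<omega> in M. 0 \<le> D" by (rule eventually_mono) auto
  then show ?thesis by simp
qed

lemma ZInf_int: "ereal (real_of_int z) \<in> ZInf" unfolding ZInf_def by auto
lemma ZInf_nat: "ereal (real k) \<in> ZInf" using ZInf_int[of "int k"] by simp
lemma ZInf_add: "ereal (real k + real n) \<in> ZInf" using ZInf_int[of "int k + int n"] by simp
lemma ZInf_diff: "ereal (real k - real n) \<in> ZInf" using ZInf_int[of "int k - int n"] by simp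
lemma ZInf_inf: "\<infinity> \<in> ZInf" "-\<infinity> \<in> ZInf" unfolding ZInf_def by auto

definition W :: "nat \<Rightarrow> nat \<Rightarrow> 'a measure" where
  "W t h = F (ereal (real t - real h)) (ereal (real t + real h))"

definition Xc :: "nat \<Rightarrow> nat \<Rightarrow> nat \<Rightarrow> 'a \<Rightarrow> real" where
  "Xc j t h = (\<lambda>\<omega>. clip D (real_cond_exp M (W t h) (X j t) \<omega>))"

lemma subW: "subalgebra M (W t h)" unfolding W_def using sub ZInf_diff ZInf_add by blast

lemma Xc_meas: "Xc j t h \<in> borel_measurable (W t h)" unfolding Xc_def by measurable
lemma Xc_measM: "Xc j t h \<in> borel_measurable M" using measurable_from_subalg[OF subW Xc_meas] .
lemma Xc_bound: "\<bar>Xc j t h \<omega>\<bar> \<le> D" unfolding Xc_def using Dnn by (rule clip_bound)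

lemma sub_sub:
  assumes "k \<in> ZInf" "k' \<in> ZInf" "m \<in> ZInf" "m' \<in> ZInf" "m' \<le> k" "k' \<le> m"
  shows "subalgebra (F m' m) (F k k')"
proof -
  have "sets (F k k') \<subseteq> sets (F m' m)" using mono assms by blast
  moreover have "space (F k k') = space (F m' m)" using sub assms by (auto simp: subalgebra_def)
  ultimately show ?thesis by (simp add: subalgebra_def)
qed

lemma Xc_meas_lo:
  assumes "ereal x \<in> ZInf" "real t + real h \<le> x"
  shows "Xc j t h \<in> borel_measurable (F (-\<infinity>) (ereal x))"
proof -
  have "subalgebra (F (-\<infinity>) (ereal x)) (W t h)" unfolding W_def
    using assms by (intro sub_sub) (auto simp: ZInf_diff ZInf_add ZInf_inf)
  from measurable_from_subalg[OF this Xc_meas] show ?thesis .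
qed

lemma Xc_meas_hi:
  assumes "ereal x \<in> ZInf" "x \<le> real t - real h"
  shows "Xc j t h \<in> borel_measurable (F (ereal x) \<infinity>)"
proof -
  have "subalgebra (F (ereal x) \<infinity>) (W t h)" unfolding W_def
    using assms by (intro sub_sub) (auto simp: ZInf_diff ZInf_add ZInf_inf)
  from measurable_from_subalg[OF this Xc_meas] show ?thesis .
qed

lemma sfs: "sigma_finite_subalgebra M (W t h)"
proof -
  interpret prob_space M by (rule M)
  have "finite_measure_subalgebra M (W t h)" using subW by unfold_locales
  then show ?thesis by (rule finite_measure_subalgebra_is_sigma_finite)
qed

lemma X_int: "j \<in> {1..l} \<Longrightarrow> integrable M (X j t)"
  using Xm Xb by (intro bnd_int_AE[OF M, where c=D]) auto

lemma ce_bound: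
  assumes j: "j \<in> {1..l}"
  shows "AE \<omega> in M. \<bar>real_cond_exp M (W t h) (X j t) \<omega>\<bar> \<le> D"
proof -
  have i: "integrable M (X j t)" using X_int j .
  have b: "AE \<omega> in M. \<bar>X j t \<omega>\<bar> \<le> D" using Xb j by auto
  have "AE \<omega> in M. X j t \<omega> \<le> D" using b by (rule eventually_mono) auto
  then have 1: "AE \<omega> in M. real_cond_exp M (W t h) (X j t) \<omega> \<le> D"
    by (rule sigma_finite_subalgebra.real_cond_exp_le_c[OF sfs i])
  have "AE \<omega> in M. X j t \<omega> \<ge> -D" using b by (rule eventually_mono) auto
  then have 2: "AE \<omega> in M. real_cond_exp M (W t h) (X j t) \<omega> \<ge> -D"
    by (rule sigma_finite_subalgebra.real_cond_exp_ge_c[OF sfs i])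
  show ?thesis using 1 2 by eventually_elim auto
qed

lemma beta_elem_bound:
  assumes j: "j \<in> {1..l}"
  shows "(\<integral>\<omega>. \<bar>X j t \<omega> - real_cond_exp M (W t h) (X j t) \<omega>\<bar> \<partial>M) \<le> 2 * D"
proof -
  have b: "AE \<omega> in M. \<bar>X j t \<omega>\<bar> \<le> D" using Xb j by auto
  have "AE \<omega> in M. \<bar>\<bar>X j t \<omega> - real_cond_exp M (W t h) (X j t) \<omega>\<bar>\<bar> \<le> 2 * D"
    using ce_bound[OF j, of t h] b by eventually_elim auto
  from abs_int_le_AE[OF M this] show ?thesis by simp
qed

lemma beta_nonneg_bdd:
  assumes j: "j \<in> {1..l}"
  shows "0 \<le> approx_beta M F (X j) n" "(\<integral>\<omega>. \<bar>X j t \<omega> - real_cond_exp M (W t n) (X j t) \<omega>\<bar> \<partial>M) \<le> approx_beta M F (X j) n"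
proof -
  let ?f = "\<lambda>m. (\<integral>\<omega>. \<bar>X j m \<omega> - real_cond_exp M (F (ereal (real m - real n)) (ereal (real m + real n))) (X j m) \<omega>\<bar> \<partial>M)"
  have bdd: "bdd_above (range ?f)"
    using beta_elem_bound[OF j] unfolding W_def by (intro bdd_aboveI[where M="2*D"]) auto
  have e: "?f t \<le> approx_beta M F (X j) n" unfolding approx_beta_def by (intro cSup_upper bdd) auto
  then show "(\<integral>\<omega>. \<bar>X j t \<omega> - real_cond_exp M (W t n) (X j t) \<omega>\<bar> \<partial>M) \<le> approx_beta M F (X j) n"
    unfolding W_def .
  have "0 \<le> ?f t" by simp
  then show "0 \<le> approx_beta M F (X j) n" using e by linarith
qed

lemma alpha_nonneg_bdd:
  assumes "A \<in> sets (F (-\<infinity>) (ereal (real k)))" "B \<in> sets (F (ereal (real k + real n)) \<infinity>)"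
  shows "0 \<le> mixing_alpha M F n" "\<bar>measure M (A \<inter> B) - measure M A * measure M B\<bar> \<le> mixing_alpha M F n"
proof -
  interpret prob_space M by (rule M)
  let ?S = "{\<bar>measure M (A \<inter> B) - measure M A * measure M B\<bar> | k A B.
       A \<in> sets (F (-\<infinity>) (ereal (real (k::nat)))) \<and> B \<in> sets (F (ereal (real k + real n)) \<infinity>)}"
  have b1: "\<bar>measure M A' * measure M B'\<bar> \<le> 1" for A' B' :: "'a set"
    by (rule order.trans[OF absmul[of _ 1 _ 1]]) auto
  have bdd: "bdd_above ?S"
  proof (rule bdd_aboveI[where M=2])
    fix x assume "x \<in> ?S"
    then obtain A' B' where x: "x = \<bar>measure M (A' \<inter> B') - measure M A' * measure M B'\<bar>" by blast
    have "\<bar>measure M (A' \<inter> B')\<bar> \<le> 1" by simp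
    then show "x \<le> 2" unfolding x using b1[of A' B'] by linarith
  qed
  have "\<bar>measure M (A \<inter> B) - measure M A * measure M B\<bar> \<in> ?S" using assms by blast
  then show "\<bar>measure M (A \<inter> B) - measure M A * measure M B\<bar> \<le> mixing_alpha M F n"
    unfolding mixing_alpha_def by (intro cSup_upper bdd)
  then show "0 \<le> mixing_alpha M F n" by linarith
qed

lemma alpha_le:
  assumes "A \<in> sets (F (-\<infinity>) (ereal (real k)))" "B \<in> sets (F (ereal (real k + real n)) \<infinity>)"
  shows "\<bar>measure M (A \<inter> B) - measure M A * measure M B\<bar> \<le> exp (- \<kappa> * real n) / \<kappa>"
proof -
  have "0 \<le> approx_beta M F (X 1) n" using beta_nonneg_bdd(1)[of 1] l1 by auto
  also have "\<dots> \<le> Max ((\<lambda>j. approx_beta M F (X j) n) ` {1..l})" using l1 by (intro Max_ge) auto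
  moreover have "mixing_alpha M F n + Max ((\<lambda>j. approx_beta M F (X j) n) ` {1..l}) \<le> exp (- \<kappa> * real n) / \<kappa>"
    using C1 by blast
  ultimately show ?thesis using alpha_nonneg_bdd[OF assms] by linarith
qed

lemma beta_le:
  assumes j: "j \<in> {1..l}"
  shows "(\<integral>\<omega>. \<bar>X j t \<omega> - real_cond_exp M (W t n) (X j t) \<omega>\<bar> \<partial>M) \<le> exp (- \<kappa> * real n) / \<kappa>"
proof -
  have "approx_beta M F (X j) n \<le> Max ((\<lambda>j. approx_beta M F (X j) n) ` {1..l})" using j by (intro Max_ge) auto
  moreover have "0 \<le> mixing_alpha M F n"
    using alpha_nonneg_bdd(1)[of "{}" 0 "{}" n] sub ZInf_nat ZInf_add ZInf_inf by (auto simp: subalgebra_def sets.empty_sets)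
  moreover have "mixing_alpha M F n + Max ((\<lambda>j. approx_beta M F (X j) n) ` {1..l}) \<le> exp (- \<kappa> * real n) / \<kappa>"
    using C1 by blast
  ultimately show ?thesis using beta_nonneg_bdd(2)[OF j, of t n] by linarith
qed

lemma Xc_err:
  assumes j: "j \<in> {1..l}"
  shows "integrable M (\<lambda>\<omega>. \<bar>X j t \<omega> - Xc j t h \<omega>\<bar>)"
    "(\<integral>\<omega>. \<bar>X j t \<omega> - Xc j t h \<omega>\<bar> \<partial>M) \<le> exp (- \<kappa> * real h) / \<kappa>"
proof -
  have Xjm: "X j t \<in> borel_measurable M" using Xm j by auto
  have b: "AE \<omega> in M. \<bar>X j t \<omega>\<bar> \<le> D" using Xb j by auto
  show i: "integrable M (\<lambda>\<omega>. \<bar>X j t \<omega> - Xc j t h \<omega>\<bar>)"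
    using Xjm Xc_measM[of j t h]
  proof (intro bnd_int_AE[OF M, where c="2*D"])
    show "AE \<omega> in M. \<bar>\<bar>X j t \<omega> - Xc j t h \<omega>\<bar>\<bar> \<le> 2 * D" using b
    proof eventually_elim
      fix \<omega> assume "\<bar>X j t \<omega>\<bar> \<le> D"
      then show "\<bar>\<bar>X j t \<omega> - Xc j t h \<omega>\<bar>\<bar> \<le> 2 * D" using Xc_bound[of j t h \<omega>] by linarith
    qed
  qed auto
  have ic: "integrable M (real_cond_exp M (W t h) (X j t))"
    using sigma_finite_subalgebra.real_cond_exp_int(1)[OF sfs X_int[OF j]] .
  have "(\<integral>\<omega>. \<bar>X j t \<omega> - Xc j t h \<omega>\<bar> \<partial>M) \<le> (\<integral>\<omega>. \<bar>X j t \<omega> - real_cond_exp M (W t h) (X j t) \<omega>\<bar> \<partial>M)"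
  proof (rule integral_mono_AE[OF i])
    show "integrable M (\<lambda>\<omega>. \<bar>X j t \<omega> - real_cond_exp M (W t h) (X j t) \<omega>\<bar>)"
      using ic X_int[OF j] by auto
    show "AE \<omega> in M. \<bar>X j t \<omega> - Xc j t h \<omega>\<bar> \<le> \<bar>X j t \<omega> - real_cond_exp M (W t h) (X j t) \<omega>\<bar>"
      using b unfolding Xc_def by (auto elim!: eventually_mono intro: clip_lip)
  qed
  also have "\<dots> \<le> exp (- \<kappa> * real h) / \<kappa>" by (rule beta_le[OF j])
  finally show "(\<integral>\<omega>. \<bar>X j t \<omega> - Xc j t h \<omega>\<bar> \<partial>M) \<le> exp (- \<kappa> * real h) / \<kappa>" .
qed

lemma stat_mean:
  assumes j: "j \<in> {1..l}"
  shows "(\<integral>\<omega>. X j t \<omega> \<partial>M) = (\<integral>\<omega>. X j 0 \<omega> \<partial>M)"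
proof -
  let ?P = "\<Pi>\<^sub>M i\<in>(UNIV::nat set). (borel::real measure)"
  have Xjm: "\<And>n. X j n \<in> borel_measurable M" using Xm j by auto
  have m1: "(\<lambda>\<omega> i. X j (i + t) \<omega>) \<in> measurable M ?P"
    by (rule measurable_PiM_single') (auto simp: Xjm)
  have m2: "(\<lambda>\<omega> i. X j i \<omega>) \<in> measurable M ?P"
    by (rule measurable_PiM_single') (auto simp: Xjm)
  have pm: "(\<lambda>f. f 0) \<in> borel_measurable ?P" by (rule measurable_component_singleton) auto
  have eq: "distr M ?P (\<lambda>\<omega> i. X j (i + t) \<omega>) = distr M ?P (\<lambda>\<omega> i. X j i \<omega>)"
    using stat j unfolding stationary_def by blast
  have "(\<integral>\<omega>. X j t \<omega> \<partial>M) = (\<integral>f. f 0 \<partial>distr M ?P (\<lambda>\<omega> i. X j (i + t) \<omega>))"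
    by (subst integral_distr[OF m1 pm]) simp
  also have "\<dots> = (\<integral>f. f 0 \<partial>distr M ?P (\<lambda>\<omega> i. X j i \<omega>))" by (simp only: eq)
  also have "\<dots> = (\<integral>\<omega>. X j 0 \<omega> \<partial>M)" by (subst integral_distr[OF m2 pm]) simp
  finally show ?thesis .
qed

definition a :: "nat \<Rightarrow> real" where "a j = (\<integral>\<omega>. X j 0 \<omega> \<partial>M)"
definition PL :: "(nat \<times> nat) list \<Rightarrow> 'a \<Rightarrow> real" where
  "PL ws \<omega> = prod_list (map (\<lambda>w. X (fst w) (snd w) \<omega>) ws)"
definition PC :: "nat \<Rightarrow> (nat \<times> nat) list \<Rightarrow> 'a \<Rightarrow> real" where
  "PC h ws \<omega> = prod_list (map (\<lambda>w. Xc (fst w) (snd w) h \<omega>) ws)"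
definition B :: real where "B = D + 1"

lemma B1: "1 \<le> B" using Dnn unfolding B_def by simp

lemma a_bound: "j \<in> {1..l} \<Longrightarrow> \<bar>a j\<bar> \<le> D"
  unfolding a_def using Xb by (intro abs_int_le_AE[OF M]) auto

lemma PC_bound: "\<bar>PC h ws \<omega>\<bar> \<le> B ^ length ws"
  unfolding PC_def B_def
proof (intro abs_prod_list_le)
  fix w show "\<bar>Xc (fst w) (snd w) h \<omega>\<bar> \<le> D + 1" using Xc_bound[of "fst w" "snd w" h \<omega>] by linarith
qed

lemma PC_bound': "length ws \<le> m \<Longrightarrow> \<bar>PC h ws \<omega>\<bar> \<le> B ^ m"
  using PC_bound[of h ws \<omega>] power_increasing[OF _ B1] by (meson order.trans)

lemma PC_meas_lo:
  assumes "ereal x \<in> ZInf" "\<forall>w\<in>set ws. real (snd w) + real h \<le> x"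
  shows "PC h ws \<in> borel_measurable (F (-\<infinity>) (ereal x))"
  unfolding PC_def using assms by (intro meas_prod_list Xc_meas_lo) auto

lemma PC_meas_hi:
  assumes "ereal x \<in> ZInf" "\<forall>w\<in>set ws. x \<le> real (snd w) - real h"
  shows "PC h ws \<in> borel_measurable (F (ereal x) \<infinity>)"
  unfolding PC_def using assms by (intro meas_prod_list Xc_meas_hi) auto

lemma PC_measM: "PC h ws \<in> borel_measurable M"
  unfolding PC_def by (intro meas_prod_list Xc_measM)

lemma PL_measM: "\<forall>w\<in>set ws. fst w \<in> {1..l} \<Longrightarrow> PL ws \<in> borel_measurable M"
  unfolding PL_def using Xm by (intro meas_prod_list) auto

lemma PL_AE: "\<forall>w\<in>set ws. fst w \<in> {1..l} \<Longrightarrow> AE \<omega> in M. \<forall>w\<in>set ws. \<bar>X (fst w) (snd w) \<omega>\<bar> \<le> D"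
  using Xb by (intro eventually_ball_finite) auto

lemma int_sum_list:
  fixes f :: "'b \<Rightarrow> 'a \<Rightarrow> real"
  assumes "\<forall>w\<in>set ws. integrable M (f w)"
  shows "integrable M (\<lambda>\<omega>. sum_list (map (\<lambda>w. f w \<omega>) ws))"
    "(\<integral>\<omega>. sum_list (map (\<lambda>w. f w \<omega>) ws) \<partial>M) = sum_list (map (\<lambda>w. \<integral>\<omega>. f w \<omega> \<partial>M) ws)"
  using assms by (induction ws) auto

lemma sum_list_le:
  fixes g :: "'b \<Rightarrow> real"
  shows "\<forall>w\<in>set ws. g w \<le> e \<Longrightarrow> sum_list (map g ws) \<le> real (length ws) * e"
  by (induction ws) (auto simp: algebra_simps)

lemma cov_step:
  assumes "U \<in> borel_measurable (F (-\<infinity>) (ereal (real k)))" "\<And>\<omega>. \<bar>U \<omega>\<bar> \<le> c1" "c1 > 0"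
    "V \<in> borel_measurable (F (ereal (real k + real n)) \<infinity>)" "\<And>\<omega>. \<bar>V \<omega>\<bar> \<le> c2" "c2 > 0"
  shows "\<bar>(\<integral>\<omega>. U \<omega> * V \<omega> \<partial>M) - (\<integral>\<omega>. U \<omega> \<partial>M) * (\<integral>\<omega>. V \<omega> \<partial>M)\<bar> \<le> 4 * c1 * c2 * (exp (- \<kappa> * real n) / \<kappa>)"
proof (rule cov_bnd[OF M _ _ _ assms])
  show "subalgebra M (F (-\<infinity>) (ereal (real k)))" using sub ZInf_inf ZInf_nat by blast
  show "subalgebra M (F (ereal (real k + real n)) \<infinity>)" using sub ZInf_inf ZInf_add by blast
qed (rule alpha_le)

lemma DL_step1:
  assumes j0: "j0 \<in> {1..l}" and wj: "\<forall>w\<in>set ws. fst w \<in> {1..l}"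
  shows "\<bar>(\<integral>\<omega>. (X j0 t0 \<omega> - a j0) * PL ws \<omega> \<partial>M) - (\<integral>\<omega>. (Xc j0 t0 h \<omega> - a j0) * PC h ws \<omega> \<partial>M)\<bar>
         \<le> (2*B) ^ Suc (length ws) * (real (Suc (length ws)) * (exp (- \<kappa> * real h) / \<kappa>))"
proof -
  interpret prob_space M by (rule M)
  define e where "e = exp (- \<kappa> * real h) / \<kappa>"
  define f where "f \<omega> = (X j0 t0 \<omega> - a j0) * PL ws \<omega>" for \<omega>
  define g where "g \<omega> = (Xc j0 t0 h \<omega> - a j0) * PC h ws \<omega>" for \<omega>
  define E where "E \<omega> = \<bar>X j0 t0 \<omega> - Xc j0 t0 h \<omega>\<bar> + sum_list (map (\<lambda>w. \<bar>X (fst w) (snd w) \<omega> - Xc (fst w) (snd w) h \<omega>\<bar>) ws)" for \<omega>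
  have B2: "1 \<le> 2 * B" using B1 by simp
  have DB: "D \<le> B" unfolding B_def by simp
  have aj: "\<bar>a j0\<bar> \<le> D" using a_bound[OF j0] .
  have X0m: "X j0 t0 \<in> borel_measurable M" using Xm j0 by auto
  have AE0: "AE \<omega> in M. \<bar>X j0 t0 \<omega>\<bar> \<le> D" using Xb j0 by auto
  have AEw: "AE \<omega> in M. \<forall>w\<in>set ws. \<bar>X (fst w) (snd w) \<omega>\<bar> \<le> D" using PL_AE[OF wj] .
  have pw: "AE \<omega> in M. \<bar>f \<omega> - g \<omega>\<bar> \<le> (2*B) ^ Suc (length ws) * E \<omega>"
    using AE0 AEw
  proof eventually_elim
    fix \<omega> assume h0: "\<bar>X j0 t0 \<omega>\<bar> \<le> D" and hw: "\<forall>w\<in>set ws. \<bar>X (fst w) (snd w) \<omega>\<bar> \<le> D"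
    define zs where "zs = (X j0 t0 \<omega> - a j0, Xc j0 t0 h \<omega> - a j0) # map (\<lambda>w. (X (fst w) (snd w) \<omega>, Xc (fst w) (snd w) h \<omega>)) ws"
    have zb: "\<bar>fst z\<bar> \<le> 2 * B \<and> \<bar>snd z\<bar> \<le> 2 * B" if "z \<in> set zs" for z
    proof -
      have xc: "\<bar>Xc j t h \<omega>\<bar> \<le> D" for j t using Xc_bound .
      have c1: "\<bar>X j0 t0 \<omega> - a j0\<bar> \<le> 2 * B" using h0 aj DB by linarith
      have c2: "\<bar>Xc j0 t0 h \<omega> - a j0\<bar> \<le> 2 * B" using xc[of j0 t0] aj DB by linarith
      have c3: "\<bar>X (fst w) (snd w) \<omega>\<bar> \<le> 2 * B" if "w \<in> set ws" for w using hw that DB Dnn by fastforce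
      have c4: "\<bar>Xc (fst w) (snd w) h \<omega>\<bar> \<le> 2 * B" for w using xc[of "fst w" "snd w"] DB Dnn by linarith
      from that consider "z = (X j0 t0 \<omega> - a j0, Xc j0 t0 h \<omega> - a j0)"
        | w where "w \<in> set ws" "z = (X (fst w) (snd w) \<omega>, Xc (fst w) (snd w) h \<omega>)"
        unfolding zs_def by auto
      then show ?thesis
      proof cases
        case 1 then show ?thesis using c1 c2 by simp
      next
        case (2 w) then show ?thesis using c3[of w] c4[of w] by simp
      qed
    qed
    have "\<bar>prod_list (map fst zs) - prod_list (map snd zs)\<bar> \<le> (2*B) ^ length zs * sum_list (map (\<lambda>z. \<bar>fst z - snd z\<bar>) zs)"
      by (rule prod_list_diff[OF B2 zb])
    moreover have "prod_list (map fst zs) = f \<omega>" unfolding zs_def f_def PL_def by (simp add: o_def)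
    moreover have "prod_list (map snd zs) = g \<omega>" unfolding zs_def g_def PC_def by (simp add: o_def)
    moreover have "sum_list (map (\<lambda>z. \<bar>fst z - snd z\<bar>) zs) = E \<omega>" unfolding zs_def E_def by (simp add: o_def)
    moreover have "length zs = Suc (length ws)" unfolding zs_def by simp
    ultimately show "\<bar>f \<omega> - g \<omega>\<bar> \<le> (2*B) ^ Suc (length ws) * E \<omega>" by simp
  qed
  have fm: "f \<in> borel_measurable M" unfolding f_def using X0m PL_measM[OF wj] by measurable
  have gm: "g \<in> borel_measurable M" unfolding g_def using Xc_measM PC_measM by measurable
  have fb: "AE \<omega> in M. \<bar>f \<omega>\<bar> \<le> 2 * D * D ^ length ws" using AE0 AEw
  proof eventually_elim
    fix \<omega> assume h0: "\<bar>X j0 t0 \<omega>\<bar> \<le> D" and hw: "\<forall>w\<in>set ws. \<bar>X (fst w) (snd w) \<omega>\<bar> \<le> D"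
    have "\<bar>PL ws \<omega>\<bar> \<le> D ^ length ws" unfolding PL_def using hw by (intro abs_prod_list_le) auto
    moreover have "\<bar>X j0 t0 \<omega> - a j0\<bar> \<le> 2 * D" using h0 aj by linarith
    ultimately show "\<bar>f \<omega>\<bar> \<le> 2 * D * D ^ length ws" unfolding f_def by (intro absmul)
  qed
  have fi: "integrable M f" by (rule bnd_int_AE[OF M fm fb])
  have gi: "integrable M g"
  proof (rule bnd_int[OF M gm, where c="2 * D * B ^ length ws"])
    fix \<omega> show "\<bar>g \<omega>\<bar> \<le> 2 * D * B ^ length ws" unfolding g_def
      using PC_bound[of h ws \<omega>] Xc_bound[of j0 t0 h \<omega>] aj by (intro absmul) auto
  qed
  have errs: "\<forall>w\<in>set ws. integrable M (\<lambda>\<omega>. \<bar>X (fst w) (snd w) \<omega> - Xc (fst w) (snd w) h \<omega>\<bar>)"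
    using Xc_err(1) wj by auto
  have Ei: "integrable M E" unfolding E_def using Xc_err(1)[OF j0] int_sum_list(1)[OF errs] by auto
  have "(\<integral>\<omega>. E \<omega> \<partial>M) = (\<integral>\<omega>. \<bar>X j0 t0 \<omega> - Xc j0 t0 h \<omega>\<bar> \<partial>M)
     + sum_list (map (\<lambda>w. \<integral>\<omega>. \<bar>X (fst w) (snd w) \<omega> - Xc (fst w) (snd w) h \<omega>\<bar> \<partial>M) ws)"
    unfolding E_def using Xc_err(1)[OF j0] int_sum_list[OF errs] by simp
  also have "\<dots> \<le> e + real (length ws) * e"
    using Xc_err(2)[OF j0] Xc_err(2) wj unfolding e_def by (intro add_mono sum_list_le) auto
  finally have Eint: "(\<integral>\<omega>. E \<omega> \<partial>M) \<le> real (Suc (length ws)) * e" by (simp add: algebra_simps)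
  have "(\<integral>\<omega>. f \<omega> \<partial>M) - (\<integral>\<omega>. g \<omega> \<partial>M) = (\<integral>\<omega>. f \<omega> - g \<omega> \<partial>M)" using fi gi by simp
  also have "\<bar>\<dots>\<bar> \<le> (\<integral>\<omega>. \<bar>f \<omega> - g \<omega>\<bar> \<partial>M)" by (rule integral_abs_bound)
  also have "\<dots> \<le> (\<integral>\<omega>. (2*B) ^ Suc (length ws) * E \<omega> \<partial>M)"
    using fi gi Ei pw by (intro integral_mono_AE) auto
  also have "\<dots> = (2*B) ^ Suc (length ws) * (\<integral>\<omega>. E \<omega> \<partial>M)" by simp
  also have "\<dots> \<le> (2*B) ^ Suc (length ws) * (real (Suc (length ws)) * e)"
    using Eint B1 by (intro mult_left_mono) auto
  finally show ?thesis unfolding f_def g_def e_def .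
qed

lemma exp_mono_n: "h \<le> n \<Longrightarrow> exp (- \<kappa> * real n) / \<kappa> \<le> exp (- \<kappa> * real h) / \<kappa>"
  using kpos by (intro divide_right_mono) (auto simp: mult_left_mono)

lemma DL_step2:
  assumes j0: "j0 \<in> {1..l}" and h1: "h \<ge> 1" and gh: "3 * h \<le> g"
    and gap: "\<forall>w\<in>set ws. real g \<le> \<bar>real (snd w) - real t0\<bar>"
  shows "\<bar>\<integral>\<omega>. (Xc j0 t0 h \<omega> - a j0) * PC h ws \<omega> \<partial>M\<bar> \<le> 17 * B ^ (2 * length ws + 1) * (exp (- \<kappa> * real h) / \<kappa>)"
proof -
  interpret prob_space M by (rule M)
  define m where "m = length ws"
  define e where "e = exp (- \<kappa> * real h) / \<kappa>"
  define n where "n = g - 2 * h"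
  have e0: "0 \<le> e" unfolding e_def using kpos by simp
  have hn: "h \<le> n" unfolding n_def using gh by simp
  have en: "exp (- \<kappa> * real n) / \<kappa> \<le> e" unfolding e_def by (rule exp_mono_n[OF hn])
  define L where "L = filter (\<lambda>w. snd w < t0) ws"
  define U where "U = filter (\<lambda>w. \<not> snd w < t0) ws"
  have Lt: "real (snd w) \<le> real t0 - real g" if "w \<in> set L" for w
    using that gap unfolding L_def by force
  have Ut: "real t0 + real g \<le> real (snd w)" if "w \<in> set U" for w
    using that gap unfolding U_def by force
  have lL: "length L \<le> m" and lU: "length U \<le> m" unfolding L_def U_def m_def by auto
  have split: "PC h ws \<omega> = PC h L \<omega> * PC h U \<omega>" for \<omega>
    unfolding PC_def L_def U_def by (rule prod_list_partition)
  have Bp: "0 < B ^ m" using B1 by simp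
  have DB: "D \<le> B" unfolding B_def by simp
  have aj: "\<bar>a j0\<bar> \<le> D" using a_bound[OF j0] .
  define Wf where "Wf \<omega> = (Xc j0 t0 h \<omega> - a j0) * PC h U \<omega>" for \<omega>
  have Xa: "\<bar>Xc j0 t0 h \<omega> - a j0\<bar> \<le> 2 * B" for \<omega> using Xc_bound[of j0 t0 h \<omega>] aj DB by linarith
  have Wb: "\<bar>Wf \<omega>\<bar> \<le> 2 * B * B ^ m" for \<omega> unfolding Wf_def using Xa PC_bound'[OF lU] by (intro absmul)
  have Wm: "Wf \<in> borel_measurable M" unfolding Wf_def using Xc_measM PC_measM by measurable
  have Wi: "integrable M Wf" by (rule bnd_int[OF M Wm]) (rule Wb)
  have EW: "\<bar>\<integral>\<omega>. Wf \<omega> \<partial>M\<bar> \<le> 9 * B ^ (m + 1) * e"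
  proof -
    let ?U' = "\<lambda>\<omega>. Xc j0 t0 h \<omega> - a j0"
    have U'm: "?U' \<in> borel_measurable (F (-\<infinity>) (ereal (real (t0 + h))))"
      using Xc_meas_lo[OF ZInf_nat, of t0 h "t0 + h" j0] by measurable
    have V'm: "PC h U \<in> borel_measurable (F (ereal (real (t0 + h) + real n)) \<infinity>)"
    proof (rule PC_meas_hi[OF ZInf_add], intro ballI)
      fix w assume "w \<in> set U"
      then show "real (t0 + h) + real n \<le> real (snd w) - real h" using Ut[of w] gh unfolding n_def by auto
    qed
    have c: "\<bar>(\<integral>\<omega>. ?U' \<omega> * PC h U \<omega> \<partial>M) - (\<integral>\<omega>. ?U' \<omega> \<partial>M) * (\<integral>\<omega>. PC h U \<omega> \<partial>M)\<bar>
      \<le> 4 * (2 * B) * B ^ m * (exp (- \<kappa> * real n) / \<kappa>)"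
      using B1 Bp by (intro cov_step[OF U'm Xa _ V'm PC_bound'[OF lU]]) auto
    also have "\<dots> \<le> 4 * (2 * B) * B ^ m * e" using en B1 Bp by (intro mult_left_mono) auto
    finally have c': "\<bar>(\<integral>\<omega>. Wf \<omega> \<partial>M) - (\<integral>\<omega>. ?U' \<omega> \<partial>M) * (\<integral>\<omega>. PC h U \<omega> \<partial>M)\<bar> \<le> 8 * B ^ (m + 1) * e"
      unfolding Wf_def by (simp add: algebra_simps)
    have Xci: "integrable M (Xc j0 t0 h)" using Xc_measM Xc_bound by (intro bnd_int[OF M]) auto
    have "(\<integral>\<omega>. ?U' \<omega> \<partial>M) = (\<integral>\<omega>. Xc j0 t0 h \<omega> \<partial>M) - (\<integral>\<omega>. X j0 t0 \<omega> \<partial>M)"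
      using Xci stat_mean[OF j0, of t0] unfolding a_def by (simp add: prob_space)
    also have "\<dots> = (\<integral>\<omega>. Xc j0 t0 h \<omega> - X j0 t0 \<omega> \<partial>M)" using Xci X_int[OF j0] by simp
    also have "\<bar>\<dots>\<bar> \<le> (\<integral>\<omega>. \<bar>Xc j0 t0 h \<omega> - X j0 t0 \<omega>\<bar> \<partial>M)" by (rule integral_abs_bound)
    also have "\<dots> = (\<integral>\<omega>. \<bar>X j0 t0 \<omega> - Xc j0 t0 h \<omega>\<bar> \<partial>M)" by (simp add: abs_minus_commute)
    also have "\<dots> \<le> e" unfolding e_def by (rule Xc_err(2)[OF j0])
    finally have u: "\<bar>\<integral>\<omega>. ?U' \<omega> \<partial>M\<bar> \<le> e" .
    have v: "\<bar>\<integral>\<omega>. PC h U \<omega> \<partial>M\<bar> \<le> B ^ m" using PC_bound'[OF lU] by (intro abs_int_le_AE[OF M]) auto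
    have uv: "\<bar>(\<integral>\<omega>. ?U' \<omega> \<partial>M) * (\<integral>\<omega>. PC h U \<omega> \<partial>M)\<bar> \<le> e * B ^ m" by (rule absmul[OF u v])
    have "e * B ^ m \<le> B ^ (m + 1) * e" using B1 e0 by (simp add: mult_left_mono mult.commute)
    then show ?thesis using c' uv by linarith
  qed
  have "(\<integral>\<omega>. (Xc j0 t0 h \<omega> - a j0) * PC h ws \<omega> \<partial>M) = (\<integral>\<omega>. PC h L \<omega> * Wf \<omega> \<partial>M)"
    unfolding split Wf_def by (simp add: algebra_simps)
  also have "\<bar>\<dots>\<bar> \<le> 17 * B ^ (2 * m + 1) * e"
  proof (cases "L = []")
    case True
    then have "(\<integral>\<omega>. PC h L \<omega> * Wf \<omega> \<partial>M) = (\<integral>\<omega>. Wf \<omega> \<partial>M)" by (simp add: PC_def)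
    moreover have "9 * B ^ (m + 1) * e \<le> 17 * B ^ (2 * m + 1) * e"
      using B1 e0 by (intro mult_right_mono mult_mono power_increasing) auto
    ultimately show ?thesis using EW by simp
  next
    case False
    then obtain w0 where "w0 \<in> set L" by (cases L) auto
    then have tg: "g \<le> t0" using Lt[of w0] by simp
    define k where "k = t0 - g + h"
    have Lm: "PC h L \<in> borel_measurable (F (-\<infinity>) (ereal (real k)))"
    proof (rule PC_meas_lo[OF ZInf_nat], intro ballI)
      fix w assume "w \<in> set L" then show "real (snd w) + real h \<le> real k" using Lt[of w] tg unfolding k_def by auto
    qed
    have kn: "real k + real n = real t0 - real h" unfolding k_def n_def using tg gh by auto
    have Wm': "Wf \<in> borel_measurable (F (ereal (real k + real n)) \<infinity>)"
    proof -
      have "Xc j0 t0 h \<in> borel_measurable (F (ereal (real k + real n)) \<infinity>)"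
        using kn by (intro Xc_meas_hi[OF ZInf_add]) auto
      moreover have "PC h U \<in> borel_measurable (F (ereal (real k + real n)) \<infinity>)"
      proof (rule PC_meas_hi[OF ZInf_add], intro ballI)
        fix w assume "w \<in> set U" then show "real k + real n \<le> real (snd w) - real h" using Ut[of w] kn by auto
      qed
      ultimately show ?thesis unfolding Wf_def by measurable
    qed
    have c: "\<bar>(\<integral>\<omega>. PC h L \<omega> * Wf \<omega> \<partial>M) - (\<integral>\<omega>. PC h L \<omega> \<partial>M) * (\<integral>\<omega>. Wf \<omega> \<partial>M)\<bar>
      \<le> 4 * B ^ m * (2 * B * B ^ m) * (exp (- \<kappa> * real n) / \<kappa>)"
      using B1 Bp by (intro cov_step[OF Lm PC_bound'[OF lL] _ Wm' Wb]) auto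
    also have "\<dots> \<le> 4 * B ^ m * (2 * B * B ^ m) * e" using en B1 Bp by (intro mult_left_mono) auto
    also have "\<dots> = 8 * B ^ (2 * m + 1) * e"
    proof -
      have "B ^ (2 * m + 1) = B ^ (m + m) * B" by (simp add: mult_2)
      also have "\<dots> = B ^ m * B ^ m * B" by (simp add: power_add)
      finally have bb: "B ^ (2 * m + 1) = B ^ m * B ^ m * B" .
      show ?thesis unfolding bb by algebra
    qed
    finally have c': "\<bar>(\<integral>\<omega>. PC h L \<omega> * Wf \<omega> \<partial>M) - (\<integral>\<omega>. PC h L \<omega> \<partial>M) * (\<integral>\<omega>. Wf \<omega> \<partial>M)\<bar> \<le> 8 * B ^ (2 * m + 1) * e" .
    have pl: "\<bar>\<integral>\<omega>. PC h L \<omega> \<partial>M\<bar> \<le> B ^ m" using PC_bound'[OF lL] by (intro abs_int_le_AE[OF M]) auto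
    have "\<bar>(\<integral>\<omega>. PC h L \<omega> \<partial>M) * (\<integral>\<omega>. Wf \<omega> \<partial>M)\<bar> \<le> B ^ m * (9 * B ^ (m + 1) * e)" by (rule absmul[OF pl EW])
    also have "\<dots> = 9 * B ^ (2 * m + 1) * e"
    proof -
      have bb: "B ^ (2 * m + 1) = B ^ m * B ^ (m + 1)" by (simp add: power_add mult_2)
      show ?thesis unfolding bb by algebra
    qed
    finally show ?thesis using c' by linarith
  qed
  finally show ?thesis unfolding m_def e_def .
qed

lemma aux_le: fixes x y P :: real shows "1 \<le> x \<Longrightarrow> 1 \<le> y \<Longrightarrow> 0 \<le> P \<Longrightarrow> P \<le> x * P * y"
proof -
  assume h: "1 \<le> x" "1 \<le> y" "0 \<le> P"
  have "P \<le> x * P" using mult_right_mono[of 1 x P] h by simp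
  moreover have "x * P \<le> x * P * y" using mult_left_mono[of 1 y "x * P"] h by simp
  ultimately show ?thesis by linarith
qed

lemma aux_le2: fixes P Q R c e :: real
  assumes "0 \<le> e" "P \<le> Q" "0 \<le> R" "R \<le> Q" "1 \<le> c"
  shows "P * (c * e) + 17 * R * e \<le> 18 * c * Q * e"
proof -
  have ce: "0 \<le> c * e" using assms by simp
  have 1: "P * (c * e) \<le> Q * (c * e)" using mult_right_mono[OF assms(2) ce] .
  have "R * e \<le> Q * e" using mult_right_mono[OF assms(4) assms(1)] .
  moreover have "Q * e \<le> c * (Q * e)" using mult_right_mono[OF assms(5), of "Q * e"] assms by (simp add: mult_nonneg_nonneg)
  ultimately have 2: "17 * R * e \<le> 17 * (c * (Q * e))" by simp
  show ?thesis using 1 2 by (simp add: algebra_simps)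
qed

definition KK :: "nat \<Rightarrow> real" where
  "KK m = 20 * (real m + 1) * (2 * B) ^ (2 * m + 1) * (1 + 1 / \<kappa>)"

lemma KK_ge: "(2 * B) ^ (m + 1) \<le> KK m" "(2 * B) ^ (m + 1) * (real (m + 1) * e) + 17 * B ^ (2 * m + 1) * e \<le> KK m * exp (- \<kappa> * real h)"
  if "e = exp (- \<kappa> * real h) / \<kappa>"
proof -
  have B2: "1 \<le> 2 * B" using B1 by simp
  have p1: "(2 * B) ^ (m + 1) \<le> (2 * B) ^ (2 * m + 1)" using B2 by (intro power_increasing) auto
  have p2: "B ^ (2 * m + 1) \<le> (2 * B) ^ (2 * m + 1)" using B1 by (intro power_mono) auto
  have P1: "1 \<le> (2 * B) ^ (2 * m + 1)" using B2 by (rule one_le_power)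
  have k1: "1 \<le> 1 + 1 / \<kappa>" using kpos by simp
  have P0: "0 \<le> (2 * B) ^ (2 * m + 1)" using P1 by linarith
  show "(2 * B) ^ (m + 1) \<le> KK m"
  proof -
    have "(2 * B) ^ (m + 1) \<le> (2 * B) ^ (2 * m + 1)" using p1 by simp
    also have "\<dots> \<le> (20 * (real m + 1)) * (2 * B) ^ (2 * m + 1) * (1 + 1 / \<kappa>)"
      using P0 k1 by (intro aux_le) auto
    finally show ?thesis unfolding KK_def by simp
  qed
  have e0: "0 \<le> e" using that kpos by simp
  have R0: "0 \<le> B ^ (2 * m + 1)" using B1 by simp
  have "(2 * B) ^ (m + 1) * (real (m + 1) * e) + 17 * B ^ (2 * m + 1) * e
      \<le> 18 * real (m + 1) * (2 * B) ^ (2 * m + 1) * e"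
    by (rule aux_le2[OF e0 p1 R0 p2]) simp
  also have "\<dots> = 18 * (real m + 1) * (2 * B) ^ (2 * m + 1) * e" by simp
  also have "\<dots> \<le> 20 * (real m + 1) * (2 * B) ^ (2 * m + 1) * e"
  proof -
    have "18 * (real m + 1) * Q * e \<le> 20 * (real m + 1) * Q * e" if "0 \<le> Q" for Q
      using that e0 by (intro mult_right_mono) auto
    from this[OF P0] show ?thesis .
  qed
  also have "e \<le> (1 + 1 / \<kappa>) * exp (- \<kappa> * real h)"
  proof -
    have "exp (- \<kappa> * real h) \<le> 1" using kpos by simp
    then have "e \<le> 1 / \<kappa>" unfolding that using kpos by (simp add: divide_right_mono)
    moreover have "exp (- \<kappa> * real h) / \<kappa> \<le> (1 / \<kappa>) * exp (- \<kappa> * real h)" by simp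
    ultimately show ?thesis unfolding that by (simp add: algebra_simps)
  qed
  then have "20 * (real m + 1) * (2 * B) ^ (2 * m + 1) * e \<le> 20 * (real m + 1) * (2 * B) ^ (2 * m + 1) * ((1 + 1 / \<kappa>) * exp (- \<kappa> * real h))"
  proof -
    have "20 * (real m + 1) * Q * e \<le> 20 * (real m + 1) * Q * ((1 + 1 / \<kappa>) * exp (- \<kappa> * real h))"
      if "0 \<le> Q" "e \<le> (1 + 1 / \<kappa>) * exp (- \<kappa> * real h)" for Q
      using that by (intro mult_left_mono) auto
    from this[OF P0] show ?thesis using \<open>e \<le> (1 + 1 / \<kappa>) * exp (- \<kappa> * real h)\<close> by simp
  qed
  finally show "(2 * B) ^ (m + 1) * (real (m + 1) * e) + 17 * B ^ (2 * m + 1) * e \<le> KK m * exp (- \<kappa> * real h)"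
    unfolding KK_def by (simp add: algebra_simps)
qed

lemma DL:
  assumes j0: "j0 \<in> {1..l}" and wj: "\<forall>w\<in>set ws. fst w \<in> {1..l}"
    and gap: "\<forall>w\<in>set ws. real g \<le> \<bar>real (snd w) - real t0\<bar>"
  shows "\<bar>\<integral>\<omega>. (X j0 t0 \<omega> - a j0) * PL ws \<omega> \<partial>M\<bar> \<le> KK (length ws) * exp (- \<kappa> * real (g div 3))"
proof (cases "g div 3 = 0")
  case True
  have aj: "\<bar>a j0\<bar> \<le> D" using a_bound[OF j0] .
  have DB: "D \<le> B" unfolding B_def by simp
  have AE0: "AE \<omega> in M. \<bar>X j0 t0 \<omega>\<bar> \<le> D" using Xb j0 by auto
  have AEw: "AE \<omega> in M. \<forall>w\<in>set ws. \<bar>X (fst w) (snd w) \<omega>\<bar> \<le> D" using PL_AE[OF wj] .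
  have "AE \<omega> in M. \<bar>(X j0 t0 \<omega> - a j0) * PL ws \<omega>\<bar> \<le> (2 * B) * B ^ length ws" using AE0 AEw
  proof eventually_elim
    fix \<omega> assume h0: "\<bar>X j0 t0 \<omega>\<bar> \<le> D" and hw: "\<forall>w\<in>set ws. \<bar>X (fst w) (snd w) \<omega>\<bar> \<le> D"
    have "\<bar>PL ws \<omega>\<bar> \<le> B ^ length ws" unfolding PL_def
    proof (intro abs_prod_list_le)
      fix w assume "w \<in> set ws" then show "\<bar>X (fst w) (snd w) \<omega>\<bar> \<le> B" using hw DB by fastforce
    qed
    moreover have "\<bar>X j0 t0 \<omega> - a j0\<bar> \<le> 2 * B" using h0 aj DB by linarith
    ultimately show "\<bar>(X j0 t0 \<omega> - a j0) * PL ws \<omega>\<bar> \<le> (2 * B) * B ^ length ws" by (intro absmul)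
  qed
  then have "\<bar>\<integral>\<omega>. (X j0 t0 \<omega> - a j0) * PL ws \<omega> \<partial>M\<bar> \<le> (2 * B) * B ^ length ws" by (rule abs_int_le_AE[OF M])
  also have "\<dots> \<le> (2 * B) ^ (length ws + 1)" using B1 by (simp add: mult_left_mono power_mono)
  also have "\<dots> \<le> KK (length ws)" by (rule KK_ge(1)) simp
  finally show ?thesis using True by simp
next
  case False
  define h where "h = g div 3"
  define e where "e = exp (- \<kappa> * real h) / \<kappa>"
  have h1: "h \<ge> 1" and gh: "3 * h \<le> g" using False unfolding h_def by auto
  have s1: "\<bar>(\<integral>\<omega>. (X j0 t0 \<omega> - a j0) * PL ws \<omega> \<partial>M) - (\<integral>\<omega>. (Xc j0 t0 h \<omega> - a j0) * PC h ws \<omega> \<partial>M)\<bar>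
         \<le> (2*B) ^ (length ws + 1) * (real (length ws + 1) * e)"
    using DL_step1[OF j0 wj, of t0 h] unfolding e_def by simp
  have s2: "\<bar>\<integral>\<omega>. (Xc j0 t0 h \<omega> - a j0) * PC h ws \<omega> \<partial>M\<bar> \<le> 17 * B ^ (2 * length ws + 1) * e"
    using DL_step2[OF j0 h1 gh gap] unfolding e_def .
  have "\<bar>\<integral>\<omega>. (X j0 t0 \<omega> - a j0) * PL ws \<omega> \<partial>M\<bar> \<le> (2*B) ^ (length ws + 1) * (real (length ws + 1) * e) + 17 * B ^ (2 * length ws + 1) * e"
    using s1 s2 by linarith
  also have "\<dots> \<le> KK (length ws) * exp (- \<kappa> * real h)" by (rule KK_ge(2)) (simp add: e_def)
  finally show ?thesis unfolding h_def .
qed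

lemma le_sum_list_nonneg:
  fixes f :: "'b \<Rightarrow> real"
  shows "\<forall>w\<in>set ws. 0 \<le> f w \<Longrightarrow> w \<in> set ws \<Longrightarrow> f w \<le> sum_list (map f ws)"
proof (induction ws)
  case Nil then show ?case by simp
next
  case (Cons x ws)
  have s0: "0 \<le> sum_list (map f ws)" using Cons.prems(1) by (induction ws) auto
  show ?case using Cons s0 by auto
qed

lemma KK_nonneg: "0 \<le> KK m"
  unfolding KK_def using B1 kpos by (intro mult_nonneg_nonneg) auto

lemma DL2:
  assumes j0: "j0 \<in> {1..l}" and wj: "\<forall>w\<in>set ws. fst w \<in> {1..l}"
  shows "\<bar>\<integral>\<omega>. (X j0 t0 \<omega> - a j0) * PL ws \<omega> \<partial>M\<bar>
     \<le> KK (length ws) * exp \<kappa> * sum_list (map (\<lambda>w. exp (- (\<kappa> / 3) * \<bar>real (snd w) - real t0\<bar>)) ws)"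
proof (cases "ws = []")
  case True
  interpret prob_space M by (rule M)
  have "(\<integral>\<omega>. (X j0 t0 \<omega> - a j0) * PL ws \<omega> \<partial>M) = (\<integral>\<omega>. X j0 t0 \<omega> \<partial>M) - a j0"
    using True X_int[OF j0] by (simp add: PL_def prob_space)
  also have "\<dots> = 0" using stat_mean[OF j0] unfolding a_def by simp
  finally show ?thesis using True by simp
next
  case False
  define d where "d w = nat \<bar>int (snd w) - int t0\<bar>" for w :: "nat \<times> nat"
  have dr: "real (d w) = \<bar>real (snd w) - real t0\<bar>" for w unfolding d_def by simp
  define g where "g = Min (d ` set ws)"
  have fin: "finite (d ` set ws)" and ne: "d ` set ws \<noteq> {}" using False by auto
  have gap: "\<forall>w\<in>set ws. real g \<le> \<bar>real (snd w) - real t0\<bar>"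
    unfolding g_def dr[symmetric] using fin by auto
  obtain ws0 where ws0: "ws0 \<in> set ws" "d ws0 = g" using Min_in[OF fin ne] unfolding g_def by auto
  have "\<bar>\<integral>\<omega>. (X j0 t0 \<omega> - a j0) * PL ws \<omega> \<partial>M\<bar> \<le> KK (length ws) * exp (- \<kappa> * real (g div 3))"
    by (rule DL[OF j0 wj gap])
  also have "exp (- \<kappa> * real (g div 3)) \<le> exp \<kappa> * exp (- (\<kappa> / 3) * real g)"
  proof -
    have "real g \<le> 3 * real (g div 3) + 3"
    proof -
      have "g \<le> 3 * (g div 3) + 3" by linarith
      then show ?thesis by linarith
    qed
    then have "\<kappa> * real g \<le> \<kappa> * (3 * real (g div 3) + 3)" using kpos by (intro mult_left_mono) auto
    then have "- \<kappa> * real (g div 3) \<le> \<kappa> + (- (\<kappa> / 3) * real g)" by (simp add: field_simps)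
    then show ?thesis by (simp add: exp_add[symmetric])
  qed
  also have "exp (- (\<kappa> / 3) * real g) \<le> sum_list (map (\<lambda>w. exp (- (\<kappa> / 3) * \<bar>real (snd w) - real t0\<bar>)) ws)"
  proof -
    have "exp (- (\<kappa> / 3) * real g) = exp (- (\<kappa> / 3) * \<bar>real (snd ws0) - real t0\<bar>)" using ws0 dr by metis
    also have "\<dots> \<le> sum_list (map (\<lambda>w. exp (- (\<kappa> / 3) * \<bar>real (snd w) - real t0\<bar>)) ws)"
      by (rule le_sum_list_nonneg[where f="\<lambda>w. exp (- (\<kappa> / 3) * \<bar>real (snd w) - real t0\<bar>)", OF _ ws0(1)]) auto
    finally show ?thesis .
  qed
  finally show ?thesis using KK_nonneg by (simp add: mult_left_mono mult.assoc)
qed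

end

context S begin

definition N0 :: nat where "N0 = nat \<lceil>n0\<rceil>"

lemma N0_le: "N0 \<le> k \<Longrightarrow> n0 \<le> real k"
proof -
  assume "N0 \<le> k"
  then have "real N0 \<le> real k" by simp
  moreover have "n0 \<le> real N0" unfolding N0_def using n01 by linarith
  ultimately show ?thesis by linarith
qed

lemma incr: assumes j: "j \<in> {1..l}" and k: "N0 \<le> k" shows "real (q j k) + 1 \<le> real (q j (Suc k))"
proof (cases "j = 1")
  case True
  then show ?thesis using q1 r0 by simp
next
  case False
  then have j2: "j \<in> {2..l}" using j by auto
  have kn: "n0 \<le> real k" using N0_le[OF k] .
  then have "real (q j (k + 1)) \<ge> real (q j k) + real k powr \<gamma>" using C3 j2 by blast
  moreover have "1 \<le> real k powr \<gamma>" using kn n01 g0 by (intro ge_one_powr_ge_zero) auto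
  ultimately show ?thesis by simp
qed

lemma mono_q: assumes j: "j \<in> {1..l}" and "N0 \<le> k1" "k1 \<le> k2" shows "q j k1 \<le> q j k2"
proof -
  have "real (q j k1) + real (k2 - k1) \<le> real (q j k2)"
    using incr[OF j] assms(2,3) by (intro incr_sep[of N0 "\<lambda>k. real (q j k)"]) auto
  then show ?thesis by simp
qed

lemma sumB:
  assumes j: "j \<in> {1..l}" and c: "c > 0"
  shows "(\<Sum>k=0..n. exp (- c * \<bar>real (q j k) - t\<bar>)) \<le> real N0 + 2 / (1 - exp (- c / 2))"
  using incr[OF j] by (intro sep_sum[OF c]) auto

definition K1 :: nat where
  "K1 = N0 + nat \<lceil>(real N0 + 1) powr (1 / (1 - \<gamma>))\<rceil> + nat \<lceil>2 powr (1 / \<gamma>)\<rceil>"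

lemma powr_thr:
  fixes y e x :: real
  assumes "0 < e" "0 < y" "y powr (1 / e) \<le> x"
  shows "y \<le> x powr e"
proof -
  have "y = (y powr (1 / e)) powr e" using assms by (simp add: powr_powr)
  also have "\<dots> \<le> x powr e" using assms by (intro powr_mono2) auto
  finally show ?thesis .
qed

lemma K1_props:
  assumes k: "K1 \<le> k"
  shows "N0 \<le> k" "real N0 \<le> real k powr (1 - \<gamma>)" "2 \<le> real k powr \<gamma>"
proof -
  show "N0 \<le> k" using k unfolding K1_def by simp
  have "(real N0 + 1) powr (1 / (1 - \<gamma>)) \<le> real k"
  proof -
    have "(real N0 + 1) powr (1 / (1 - \<gamma>)) \<le> real (nat \<lceil>(real N0 + 1) powr (1 / (1 - \<gamma>))\<rceil>)" by linarith
    also have "\<dots> \<le> real k" using k unfolding K1_def by simp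
    finally show ?thesis .
  qed
  then have "real N0 + 1 \<le> real k powr (1 - \<gamma>)" using g1 by (intro powr_thr) auto
  then show "real N0 \<le> real k powr (1 - \<gamma>)" by simp
  have "2 powr (1 / \<gamma>) \<le> real k"
  proof -
    have "2 powr (1 / \<gamma>) \<le> real (nat \<lceil>2 powr (1 / \<gamma>)\<rceil>)" by linarith
    also have "\<dots> \<le> real k" using k unfolding K1_def by simp
    finally show ?thesis .
  qed
  then show "2 \<le> real k powr \<gamma>" using g0 by (intro powr_thr) auto
qed

lemma dbl:
  assumes k: "K1 \<le> k" and m: "m \<in> {1..l-1}"
  shows "2 * q m k \<le> q (Suc m) k"
proof -
  note kp = K1_props[OF k]
  have kn: "n0 \<le> real k" using N0_le[OF kp(1)] .
  have k1: "1 \<le> real k" using kn n01 by linarith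
  define k' where "k' = nat \<lfloor>real k powr (1 - \<gamma>)\<rfloor>"
  have c4: "real (q (m + 1) k') \<ge> real (q m k) * real k powr \<gamma>" using C4 kn m unfolding k'_def by blast
  have "real (q m k) * 2 \<le> real (q m k) * real k powr \<gamma>" using kp(3) by (intro mult_left_mono) auto
  then have "real (2 * q m k) \<le> real (q m k) * real k powr \<gamma>" by simp
  also have "\<dots> \<le> real (q (m + 1) k')" by (rule c4)
  also have "q (m + 1) k' \<le> q (m + 1) k"
  proof (rule mono_q)
    show "m + 1 \<in> {1..l}" using m by auto
    show "N0 \<le> k'" unfolding k'_def using kp(2) by (simp add: le_nat_floor)
    have "real k powr (1 - \<gamma>) \<le> real k powr 1" using k1 g0 by (intro powr_mono) auto
    then have "real k powr (1 - \<gamma>) \<le> real k" using k1 by simp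
    then have "\<lfloor>real k powr (1 - \<gamma>)\<rfloor> \<le> \<lfloor>real k\<rfloor>" by (rule floor_mono)
    then show "k' \<le> k" unfolding k'_def by (simp add: nat_le_iff)
  qed
  finally show ?thesis by simp
qed

lemma ge_k: "K1 \<le> k \<Longrightarrow> m \<in> {1..l} \<Longrightarrow> k \<le> q m k"
proof (induction m)
  case 0 then show ?case by simp
next
  case (Suc m)
  show ?case
  proof (cases "m = 0")
    case True then show ?thesis using q1 r0 by (simp add: trans_le_add1)
  next
    case False
    then have "m \<in> {1..l}" "m \<in> {1..l-1}" using Suc.prems by auto
    then have "k \<le> q m k" "2 * q m k \<le> q (Suc m) k" using Suc dbl by auto
    then show ?thesis by linarith
  qed
qed

lemma chain: "K1 \<le> k \<Longrightarrow> 1 \<le> i \<Longrightarrow> i < j \<Longrightarrow> j \<le> l \<Longrightarrow> 2 * q i k \<le> q j k"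
proof (induction j)
  case 0 then show ?case by simp
next
  case (Suc j)
  have d: "2 * q j k \<le> q (Suc j) k" using Suc.prems by (intro dbl) auto
  show ?case
  proof (cases "i = j")
    case True then show ?thesis using d by simp
  next
    case False
    then have "2 * q i k \<le> q j k" using Suc by auto
    then show ?thesis using d by linarith
  qed
qed

lemma gap_k:
  assumes k: "K1 \<le> k" and ij: "i \<in> {1..l}" "j \<in> {1..l}" "i \<noteq> j"
  shows "real k \<le> \<bar>real (q j k) - real (q i k)\<bar>"
proof (cases "i < j")
  case True
  have "2 * q i k \<le> q j k" using chain[OF k _ True] ij by auto
  moreover have "k \<le> q i k" using ge_k[OF k] ij by auto
  ultimately show ?thesis by linarith
next
  case False
  then have "j < i" using ij by auto
  have "2 * q j k \<le> q i k" using chain[OF k _ \<open>j < i\<close>] ij by auto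
  moreover have "k \<le> q j k" using ge_k[OF k] ij by auto
  ultimately show ?thesis by linarith
qed

lemma sumA:
  assumes ij: "i \<in> {1..l}" "j \<in> {1..l}" "i \<noteq> j" and c: "c > 0"
  shows "(\<Sum>k=0..n. exp (- c * \<bar>real (q j k) - real (q i k)\<bar>)) \<le> real K1 + 1 / (1 - exp (- c))"
proof -
  define S where "S = {k\<in>{0..n}. K1 \<le> k}"
  define T where "T = {k\<in>{0..n}. k < K1}"
  have fin: "finite S" "finite T" unfolding S_def T_def by auto
  have "{0..n} = S \<union> T" "S \<inter> T = {}" unfolding S_def T_def by auto
  then have "(\<Sum>k=0..n. exp (- c * \<bar>real (q j k) - real (q i k)\<bar>)) = (\<Sum>k\<in>S. exp (- c * \<bar>real (q j k) - real (q i k)\<bar>)) + (\<Sum>k\<in>T. exp (- c * \<bar>real (q j k) - real (q i k)\<bar>))"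
    using fin by (simp add: sum.union_disjoint)
  also have "(\<Sum>k\<in>T. exp (- c * \<bar>real (q j k) - real (q i k)\<bar>)) \<le> (\<Sum>k\<in>T. 1)" using c by (intro sum_mono) auto
  also have "\<dots> \<le> real K1"
  proof -
    have "T \<subseteq> {..<K1}" unfolding T_def by auto
    then have "card T \<le> K1" using card_mono[of "{..<K1}" T] by simp
    then show ?thesis by simp
  qed
  also have "(\<Sum>k\<in>S. exp (- c * \<bar>real (q j k) - real (q i k)\<bar>)) \<le> (\<Sum>k\<in>S. exp (- c) ^ k)"
  proof (intro sum_mono)
    fix k assume "k \<in> S"
    then have "real k \<le> \<bar>real (q j k) - real (q i k)\<bar>" using gap_k ij unfolding S_def by auto
    then have "- c * \<bar>real (q j k) - real (q i k)\<bar> \<le> - c * real k" using c by (simp add: mult_left_mono)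
    then have "exp (- c * \<bar>real (q j k) - real (q i k)\<bar>) \<le> exp (- c * real k)" by simp
    also have "\<dots> = exp (- c) ^ k" by (rule exp_pow)
    finally show "exp (- c * \<bar>real (q j k) - real (q i k)\<bar>) \<le> exp (- c) ^ k" .
  qed
  also have "\<dots> \<le> 1 / (1 - exp (- c))" using c fin by (intro geo_bound) auto
  finally show ?thesis by simp
qed

end

lemma telescope:
  fixes y c :: "nat \<Rightarrow> real"
  shows "(\<Prod>j\<in>{1..l}. y j) - (\<Prod>j\<in>{1..l}. c j)
       = (\<Sum>i\<in>{1..l}. (\<Prod>j\<in>{1..<i}. c j) * (y i - c i) * (\<Prod>j\<in>{i<..l}. y j))"
proof -
  define T where "T i = (\<Prod>j\<in>{1..<i}. c j) * (\<Prod>j\<in>{i..l}. y j)" for i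
  have step: "T i - T (Suc i) = (\<Prod>j\<in>{1..<i}. c j) * (y i - c i) * (\<Prod>j\<in>{i<..l}. y j)"
    if "i \<in> {1..l}" for i
  proof -
    have p1: "(\<Prod>j\<in>{1..<Suc i}. c j) = (\<Prod>j\<in>{1..<i}. c j) * c i" using that by (simp add: prod.atLeastLessThan_Suc)
    have "{i..l} = insert i {i<..l}" using that by auto
    then have p2: "(\<Prod>j\<in>{i..l}. y j) = y i * (\<Prod>j\<in>{i<..l}. y j)" by simp
    have p3: "{Suc i..l} = {i<..l}" by auto
    show ?thesis unfolding T_def p1 p2 p3 by (simp add: algebra_simps)
  qed
  have "(\<Sum>i\<in>{1..l}. (\<Prod>j\<in>{1..<i}. c j) * (y i - c i) * (\<Prod>j\<in>{i<..l}. y j)) = (\<Sum>i\<in>{1..<Suc l}. T i - T (Suc i))"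
    using step by (intro sum.cong) auto
  also have "\<dots> = - (\<Sum>i\<in>{1..<Suc l}. T (Suc i) - T i)" by (simp add: sum_negf[symmetric])
  also have "\<dots> = T 1 - T (Suc l)"
  proof (cases "l = 0")
    case True then show ?thesis by simp
  next
    case False then show ?thesis by (subst sum_Suc_diff') auto
  qed
  also have "T 1 = (\<Prod>j\<in>{1..l}. y j)" unfolding T_def by simp
  also have "T (Suc l) = (\<Prod>j\<in>{1..l}. c j)" unfolding T_def by (simp add: atLeastLessThanSuc_atLeastAtMost)
  finally show ?thesis by simp
qed

context S begin

definition suf :: "nat \<Rightarrow> nat \<Rightarrow> (nat \<times> nat) list" where
  "suf k i = map (\<lambda>j. (j, q j k)) [Suc i..<Suc l]"

definition ee :: "nat \<Rightarrow> nat \<Rightarrow> real" where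
  "ee u v = exp (- (\<kappa> / 3) * \<bar>real u - real v\<bar>)"

lemma ee_nonneg: "0 \<le> ee u v" unfolding ee_def by simp

lemma set_suf_j: "\<forall>w\<in>set (suf k i). fst w \<in> {1..l}" unfolding suf_def by auto
lemma len_suf: "length (suf k i) \<le> l" unfolding suf_def length_map length_upt by simp

lemma upt_set: "set [Suc i..<Suc l] = {i<..l}" by auto

lemma PL_suf: "PL (suf k i) \<omega> = (\<Prod>j\<in>{i<..l}. X j (q j k) \<omega>)"
proof -
  have "PL (suf k i) \<omega> = prod_list (map (\<lambda>j. X j (q j k) \<omega>) [Suc i..<Suc l])"
    unfolding PL_def suf_def by (simp add: o_def)
  also have "\<dots> = (\<Prod>j\<in>set [Suc i..<Suc l]. X j (q j k) \<omega>)" by (rule prod.distinct_set_conv_list[symmetric]) simp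
  finally show ?thesis unfolding upt_set .
qed

lemma sum_suf: "sum_list (map (\<lambda>w. ee (snd w) t0) (suf k i)) = (\<Sum>j\<in>{i<..l}. ee (q j k) t0)"
proof -
  have "sum_list (map (\<lambda>w. ee (snd w) t0) (suf k i)) = sum_list (map (\<lambda>j. ee (q j k) t0) [Suc i..<Suc l])"
    unfolding suf_def by (simp add: o_def)
  also have "\<dots> = (\<Sum>j\<in>set [Suc i..<Suc l]. ee (q j k) t0)" by (rule sum.distinct_set_conv_list[symmetric]) simp
  finally show ?thesis unfolding upt_set .
qed

lemma PL_append: "PL (xs @ ys) \<omega> = PL xs \<omega> * PL ys \<omega>" unfolding PL_def by simp
lemma PL_Cons: "PL (w # ys) \<omega> = X (fst w) (snd w) \<omega> * PL ys \<omega>" unfolding PL_def by simp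

lemma KK_mono: "m \<le> m' \<Longrightarrow> KK m \<le> KK m'"
proof -
  assume mm: "m \<le> m'"
  have B2: "1 \<le> 2 * B" using B1 by simp
  have p: "(2 * B) ^ (2 * m + 1) \<le> (2 * B) ^ (2 * m' + 1)" using B2 mm by (intro power_increasing) auto
  have k: "0 \<le> 1 + 1 / \<kappa>" using kpos by simp
  have "20 * (real m + 1) * (2 * B) ^ (2 * m + 1) \<le> 20 * (real m' + 1) * (2 * B) ^ (2 * m' + 1)"
    using p mm B2 by (intro mult_mono) auto
  then show ?thesis unfolding KK_def using k by (intro mult_right_mono) auto
qed

lemma int_XPL:
  assumes j0: "j0 \<in> {1..l}" and wj: "\<forall>w\<in>set ws. fst w \<in> {1..l}"
  shows "integrable M (\<lambda>\<omega>. (X j0 t0 \<omega> - a j0) * PL ws \<omega>)"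
proof (rule bnd_int_AE[OF M])
  show "(\<lambda>\<omega>. (X j0 t0 \<omega> - a j0) * PL ws \<omega>) \<in> borel_measurable M"
  proof -
    have X0m: "X j0 t0 \<in> borel_measurable M" using Xm j0 by auto
    show ?thesis using X0m PL_measM[OF wj] by measurable
  qed
  have aj: "\<bar>a j0\<bar> \<le> D" using a_bound[OF j0] .
  have AE0: "AE \<omega> in M. \<bar>X j0 t0 \<omega>\<bar> \<le> D" using Xb j0 by auto
  show "AE \<omega> in M. \<bar>(X j0 t0 \<omega> - a j0) * PL ws \<omega>\<bar> \<le> 2 * D * D ^ length ws" using AE0 PL_AE[OF wj]
  proof eventually_elim
    fix \<omega> assume h0: "\<bar>X j0 t0 \<omega>\<bar> \<le> D" and hw: "\<forall>w\<in>set ws. \<bar>X (fst w) (snd w) \<omega>\<bar> \<le> D"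
    have "\<bar>PL ws \<omega>\<bar> \<le> D ^ length ws" unfolding PL_def using hw by (intro abs_prod_list_le) auto
    moreover have "\<bar>X j0 t0 \<omega> - a j0\<bar> \<le> 2 * D" using h0 aj by linarith
    ultimately show "\<bar>(X j0 t0 \<omega> - a j0) * PL ws \<omega>\<bar> \<le> 2 * D * D ^ length ws" by (intro absmul)
  qed
qed

lemma DL3:
  assumes j0: "j0 \<in> {1..l}" and wj: "\<forall>w\<in>set ws. fst w \<in> {1..l}" and len: "length ws \<le> 2 * l"
  shows "\<bar>\<integral>\<omega>. (X j0 t0 \<omega> - a j0) * PL ws \<omega> \<partial>M\<bar> \<le> KK (2 * l) * exp \<kappa> * sum_list (map (\<lambda>w. ee (snd w) t0) ws)"
proof -
  have s0: "0 \<le> sum_list (map (\<lambda>w. ee (snd w) t0) ws)" by (induction ws) (auto simp: ee_nonneg)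
  have "\<bar>\<integral>\<omega>. (X j0 t0 \<omega> - a j0) * PL ws \<omega> \<partial>M\<bar> \<le> KK (length ws) * exp \<kappa> * sum_list (map (\<lambda>w. ee (snd w) t0) ws)"
    using DL2[OF j0 wj] unfolding ee_def .
  also have "\<dots> \<le> KK (2 * l) * exp \<kappa> * sum_list (map (\<lambda>w. ee (snd w) t0) ws)"
    using KK_mono[OF len] s0 by (intro mult_right_mono) auto
  finally show ?thesis .
qed

lemma sum_sub_le:
  assumes "A \<subseteq> A'" "finite A'"
  shows "(\<Sum>j\<in>A. ee (f j) t) \<le> (\<Sum>j\<in>A'. ee (f j) t)"
  using assms by (intro sum_mono2) (auto simp: ee_nonneg)

lemma term_bound:
  assumes i: "i \<in> {1..l}" and i': "i' \<in> {1..l}"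
  shows "\<bar>\<integral>\<omega>. (X i (q i k) \<omega> - a i) * PL (suf k i) \<omega> * ((X i' (q i' k') \<omega> - a i') * PL (suf k' i') \<omega>) \<partial>M\<bar>
   \<le> (1 + D) * KK (2 * l) * exp \<kappa> * ((\<Sum>j\<in>{1..l}-{i}. ee (q j k) (q i k)) + (\<Sum>j\<in>{1..l}. ee (q j k') (q i k)))"
proof -
  define L1 where "L1 = suf k i @ ((i', q i' k') # suf k' i')"
  define L2 where "L2 = suf k i @ suf k' i'"
  define \<Sigma> where "\<Sigma> = (\<Sum>j\<in>{1..l}-{i}. ee (q j k) (q i k)) + (\<Sum>j\<in>{1..l}. ee (q j k') (q i k))"
  define t0 where "t0 = q i k"
  have wj1: "\<forall>w\<in>set L1. fst w \<in> {1..l}" unfolding L1_def using set_suf_j i' by auto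
  have wj2: "\<forall>w\<in>set L2. fst w \<in> {1..l}" unfolding L2_def using set_suf_j by auto
  have len1: "length L1 \<le> 2 * l"
  proof -
    have "length (suf k i) \<le> l - i" "length (suf k' i') \<le> l - i'" unfolding suf_def by auto
    then show ?thesis unfolding L1_def using i i' by auto
  qed
  have len2: "length L2 \<le> 2 * l" unfolding L2_def using len_suf[of k i] len_suf[of k' i'] by simp
  have eq: "(X i (q i k) \<omega> - a i) * PL (suf k i) \<omega> * ((X i' (q i' k') \<omega> - a i') * PL (suf k' i') \<omega>)
     = (X i (q i k) \<omega> - a i) * PL L1 \<omega> - a i' * ((X i (q i k) \<omega> - a i) * PL L2 \<omega>)" for \<omega>
    unfolding L1_def L2_def PL_append PL_Cons by (simp add: algebra_simps)
  have int1: "integrable M (\<lambda>\<omega>. (X i (q i k) \<omega> - a i) * PL L1 \<omega>)" by (rule int_XPL[OF i wj1])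
  have int2: "integrable M (\<lambda>\<omega>. (X i (q i k) \<omega> - a i) * PL L2 \<omega>)" by (rule int_XPL[OF i wj2])
  have S1: "sum_list (map (\<lambda>w. ee (snd w) t0) L1) \<le> \<Sigma>"
  proof -
    have "sum_list (map (\<lambda>w. ee (snd w) t0) L1) = (\<Sum>j\<in>{i<..l}. ee (q j k) t0) + (ee (q i' k') t0 + (\<Sum>j\<in>{i'<..l}. ee (q j k') t0))"
      unfolding L1_def by (simp add: sum_suf)
    also have "ee (q i' k') t0 + (\<Sum>j\<in>{i'<..l}. ee (q j k') t0) = (\<Sum>j\<in>insert i' {i'<..l}. ee (q j k') t0)" by simp
    also have "(\<Sum>j\<in>{i<..l}. ee (q j k) t0) \<le> (\<Sum>j\<in>{1..l}-{i}. ee (q j k) t0)" using i by (intro sum_sub_le) auto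
    also have "(\<Sum>j\<in>insert i' {i'<..l}. ee (q j k') t0) \<le> (\<Sum>j\<in>{1..l}. ee (q j k') t0)" using i' by (intro sum_sub_le) auto
    finally show ?thesis unfolding \<Sigma>_def t0_def by simp
  qed
  have S2: "sum_list (map (\<lambda>w. ee (snd w) t0) L2) \<le> \<Sigma>"
  proof -
    have "sum_list (map (\<lambda>w. ee (snd w) t0) L2) = (\<Sum>j\<in>{i<..l}. ee (q j k) t0) + (\<Sum>j\<in>{i'<..l}. ee (q j k') t0)"
      unfolding L2_def by (simp add: sum_suf)
    also have "(\<Sum>j\<in>{i<..l}. ee (q j k) t0) \<le> (\<Sum>j\<in>{1..l}-{i}. ee (q j k) t0)" using i by (intro sum_sub_le) auto
    also have "(\<Sum>j\<in>{i'<..l}. ee (q j k') t0) \<le> (\<Sum>j\<in>{1..l}. ee (q j k') t0)" using i' by (intro sum_sub_le) auto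
    finally show ?thesis unfolding \<Sigma>_def t0_def by simp
  qed
  define K where "K = KK (2 * l) * exp \<kappa>"
  have K0: "0 \<le> K" unfolding K_def using KK_nonneg by simp
  have b1: "\<bar>\<integral>\<omega>. (X i (q i k) \<omega> - a i) * PL L1 \<omega> \<partial>M\<bar> \<le> K * \<Sigma>"
    using DL3[OF i wj1 len1, of t0] S1 K0 unfolding K_def t0_def by (meson mult_left_mono order.trans)
  have b2: "\<bar>\<integral>\<omega>. (X i (q i k) \<omega> - a i) * PL L2 \<omega> \<partial>M\<bar> \<le> K * \<Sigma>"
    using DL3[OF i wj2 len2, of t0] S2 K0 unfolding K_def t0_def by (meson mult_left_mono order.trans)
  have ai': "\<bar>a i'\<bar> \<le> D" using a_bound[OF i'] .
  have "(\<integral>\<omega>. (X i (q i k) \<omega> - a i) * PL (suf k i) \<omega> * ((X i' (q i' k') \<omega> - a i') * PL (suf k' i') \<omega>) \<partial>M)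
     = (\<integral>\<omega>. (X i (q i k) \<omega> - a i) * PL L1 \<omega> \<partial>M) - a i' * (\<integral>\<omega>. (X i (q i k) \<omega> - a i) * PL L2 \<omega> \<partial>M)"
    unfolding eq using int1 int2 by simp
  also have "\<bar>\<dots>\<bar> \<le> K * \<Sigma> + D * (K * \<Sigma>)"
    by (rule order.trans[OF abs_triangle_ineq4]) (intro add_mono b1 absmul[OF ai' b2])
  also have "\<dots> = (1 + D) * KK (2 * l) * exp \<kappa> * \<Sigma>" unfolding K_def by (simp add: algebra_simps)
  finally show ?thesis unfolding \<Sigma>_def .
qed

end

context S begin

definition Rk :: "nat \<Rightarrow> 'a \<Rightarrow> real" where
  "Rk k \<omega> = (\<Prod>j\<in>{1..l}. X j (q j k) \<omega>) - (\<Prod>j\<in>{1..l}. a j)"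

definition cc :: "nat \<Rightarrow> real" where "cc i = (\<Prod>j\<in>{1..<i}. a j)"

definition T :: "nat \<Rightarrow> nat \<Rightarrow> nat \<Rightarrow> nat \<Rightarrow> 'a \<Rightarrow> real" where
  "T k k' i i' \<omega> = (X i (q i k) \<omega> - a i) * PL (suf k i) \<omega> * ((X i' (q i' k') \<omega> - a i') * PL (suf k' i') \<omega>)"

lemma R_decomp: "Rk k \<omega> = (\<Sum>i\<in>{1..l}. cc i * ((X i (q i k) \<omega> - a i) * PL (suf k i) \<omega>))"
  unfolding Rk_def cc_def telescope PL_suf by (simp add: algebra_simps)

lemma cc_bound: "i \<in> {1..l} \<Longrightarrow> \<bar>cc i\<bar> \<le> B ^ l"
proof -
  assume i: "i \<in> {1..l}"
  have "\<bar>cc i\<bar> = (\<Prod>j\<in>{1..<i}. \<bar>a j\<bar>)" unfolding cc_def by (simp add: abs_prod)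
  also have "\<dots> \<le> (\<Prod>j\<in>{1..<i}. B)"
  proof (rule prod_mono)
    fix j assume "j \<in> {1..<i}"
    then have "j \<in> {1..l}" using i by auto
    then show "0 \<le> \<bar>a j\<bar> \<and> \<bar>a j\<bar> \<le> B" using a_bound unfolding B_def by fastforce
  qed
  also have "\<dots> = B ^ (i - 1)" by simp
  also have "\<dots> \<le> B ^ l" using B1 i by (intro power_increasing) auto
  finally show ?thesis .
qed

lemma T_int: "i \<in> {1..l} \<Longrightarrow> i' \<in> {1..l} \<Longrightarrow> integrable M (T k k' i i')"
proof -
  assume i: "i \<in> {1..l}" and i': "i' \<in> {1..l}"
  define L1 where "L1 = suf k i @ ((i', q i' k') # suf k' i')"
  define L2 where "L2 = suf k i @ suf k' i'"
  have wj1: "\<forall>w\<in>set L1. fst w \<in> {1..l}" unfolding L1_def using set_suf_j i' by auto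
  have wj2: "\<forall>w\<in>set L2. fst w \<in> {1..l}" unfolding L2_def using set_suf_j by auto
  have eq: "T k k' i i' = (\<lambda>\<omega>. (X i (q i k) \<omega> - a i) * PL L1 \<omega> - a i' * ((X i (q i k) \<omega> - a i) * PL L2 \<omega>))"
    unfolding T_def L1_def L2_def PL_append PL_Cons by (simp add: algebra_simps fun_eq_iff)
  show ?thesis unfolding eq using int_XPL[OF i wj1] int_XPL[OF i wj2] by simp
qed

definition K4 :: real where "K4 = (1 + D) * KK (2 * l) * exp \<kappa>"
definition Gk :: "nat \<Rightarrow> real" where "Gk k = (\<Sum>i\<in>{1..l}. \<Sum>j\<in>{1..l}-{i}. ee (q j k) (q i k))"
definition Hk :: "nat \<Rightarrow> nat \<Rightarrow> real" where "Hk k k' = (\<Sum>i\<in>{1..l}. \<Sum>j\<in>{1..l}. ee (q j k') (q i k))"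

lemma RR_expand: "Rk k \<omega> * Rk k' \<omega> = (\<Sum>i\<in>{1..l}. \<Sum>i'\<in>{1..l}. cc i * cc i' * T k k' i i' \<omega>)"
  unfolding R_decomp sum_product T_def by (intro sum.cong refl) (simp add: algebra_simps)

lemma ti: "i \<in> {1..l} \<Longrightarrow> i' \<in> {1..l} \<Longrightarrow> integrable M (\<lambda>\<omega>. cc i * cc i' * T k k' i i' \<omega>)"
  using T_int[of i i' k k'] by simp

lemma RR_int: "integrable M (\<lambda>\<omega>. Rk k \<omega> * Rk k' \<omega>)"
  unfolding RR_expand by (intro Bochner_Integration.integrable_sum ti) auto

lemma RR_integral: "(\<integral>\<omega>. Rk k \<omega> * Rk k' \<omega> \<partial>M) = (\<Sum>i\<in>{1..l}. \<Sum>i'\<in>{1..l}. cc i * cc i' * (\<integral>\<omega>. T k k' i i' \<omega> \<partial>M))"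
proof -
  have "(\<integral>\<omega>. Rk k \<omega> * Rk k' \<omega> \<partial>M) = (\<Sum>i\<in>{1..l}. \<integral>\<omega>. (\<Sum>i'\<in>{1..l}. cc i * cc i' * T k k' i i' \<omega>) \<partial>M)"
    unfolding RR_expand by (rule Bochner_Integration.integral_sum) (intro Bochner_Integration.integrable_sum ti, auto)
  also have "\<dots> = (\<Sum>i\<in>{1..l}. \<Sum>i'\<in>{1..l}. \<integral>\<omega>. cc i * cc i' * T k k' i i' \<omega> \<partial>M)"
    by (intro sum.cong refl Bochner_Integration.integral_sum ti) auto
  also have "\<dots> = (\<Sum>i\<in>{1..l}. \<Sum>i'\<in>{1..l}. cc i * cc i' * (\<integral>\<omega>. T k k' i i' \<omega> \<partial>M))" by simp
  finally show ?thesis .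
qed

lemma sumconst: fixes f :: "nat \<Rightarrow> real" shows "(\<Sum>i\<in>{1..l}. \<Sum>i'\<in>{1..l}. f i) = (\<Sum>i\<in>{1..l}. real l * f i)"
  by simp

definition Yi :: "nat \<Rightarrow> nat \<Rightarrow> nat \<Rightarrow> real" where
  "Yi k k' i = (\<Sum>j\<in>{1..l}-{i}. ee (q j k) (q i k)) + (\<Sum>j\<in>{1..l}. ee (q j k') (q i k))"

lemma RR_bound: "\<bar>\<integral>\<omega>. Rk k \<omega> * Rk k' \<omega> \<partial>M\<bar> \<le> real l * (B ^ l * B ^ l * K4) * (Gk k + Hk k k')"
proof -
  let ?c = "B ^ l * B ^ l * K4"
  have tb: "\<bar>cc i * cc i' * (\<integral>\<omega>. T k k' i i' \<omega> \<partial>M)\<bar> \<le> ?c * Yi k k' i" if i: "i \<in> {1..l}" and i': "i' \<in> {1..l}" for i i'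
  proof -
    have "\<bar>cc i * cc i'\<bar> \<le> B ^ l * B ^ l" by (rule absmul[OF cc_bound[OF i] cc_bound[OF i']])
    moreover have "\<bar>\<integral>\<omega>. T k k' i i' \<omega> \<partial>M\<bar> \<le> K4 * Yi k k' i"
      using term_bound[OF i i'] unfolding T_def K4_def Yi_def .
    ultimately have "\<bar>cc i * cc i' * (\<integral>\<omega>. T k k' i i' \<omega> \<partial>M)\<bar> \<le> B ^ l * B ^ l * (K4 * Yi k k' i)"
      by (rule absmul)
    then show ?thesis by (simp only: mult.assoc)
  qed
  have b1: "\<bar>\<Sum>i\<in>{1..l}. \<Sum>i'\<in>{1..l}. cc i * cc i' * (\<integral>\<omega>. T k k' i i' \<omega> \<partial>M)\<bar>
        \<le> (\<Sum>i\<in>{1..l}. \<bar>\<Sum>i'\<in>{1..l}. cc i * cc i' * (\<integral>\<omega>. T k k' i i' \<omega> \<partial>M)\<bar>)" by (rule sum_abs)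
  have b2: "(\<Sum>i\<in>{1..l}. \<bar>\<Sum>i'\<in>{1..l}. cc i * cc i' * (\<integral>\<omega>. T k k' i i' \<omega> \<partial>M)\<bar>) \<le> (\<Sum>i\<in>{1..l}. \<Sum>i'\<in>{1..l}. \<bar>cc i * cc i' * (\<integral>\<omega>. T k k' i i' \<omega> \<partial>M)\<bar>)"
    by (rule sum_mono) (rule sum_abs)
  have b3: "(\<Sum>i\<in>{1..l}. \<Sum>i'\<in>{1..l}. \<bar>cc i * cc i' * (\<integral>\<omega>. T k k' i i' \<omega> \<partial>M)\<bar>) \<le> (\<Sum>i\<in>{1..l}. \<Sum>i'\<in>{1..l}. ?c * Yi k k' i)"
    by (rule sum_mono, rule sum_mono, rule tb) auto
  have e1: "(\<Sum>i\<in>{1..l}. \<Sum>i'\<in>{1..l}. ?c * Yi k k' i) = (\<Sum>i\<in>{1..l}. real l * (?c * Yi k k' i))"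
    by (rule sumconst)
  have e2: "(\<Sum>i\<in>{1..l}. real l * (?c * Yi k k' i)) = real l * (?c * (\<Sum>i\<in>{1..l}. Yi k k' i))"
    by (simp only: sum_distrib_left)
  have e3: "(\<Sum>i\<in>{1..l}. Yi k k' i) = Gk k + Hk k k'" unfolding Yi_def Gk_def Hk_def by (rule sum.distrib)
  have "\<bar>\<Sum>i\<in>{1..l}. \<Sum>i'\<in>{1..l}. cc i * cc i' * (\<integral>\<omega>. T k k' i i' \<omega> \<partial>M)\<bar> \<le> real l * (?c * (Gk k + Hk k k'))"
    using b1 b2 b3 e1 e2[unfolded e3] by linarith
  then show ?thesis unfolding RR_integral by (simp only: mult.assoc)
qed


lemma sumG: "(\<Sum>k=0..n. Gk k) \<le> real l * real l * (real K1 + 1 / (1 - exp (- (\<kappa> / 3))))"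
proof -
  let ?CA = "real K1 + 1 / (1 - exp (- (\<kappa> / 3)))"
  have CA0: "0 \<le> ?CA" using kpos by simp
  have "(\<Sum>k=0..n. Gk k) = (\<Sum>i\<in>{1..l}. \<Sum>k=0..n. \<Sum>j\<in>{1..l}-{i}. ee (q j k) (q i k))"
    unfolding Gk_def by (rule sum.swap)
  also have "\<dots> = (\<Sum>i\<in>{1..l}. \<Sum>j\<in>{1..l}-{i}. \<Sum>k=0..n. ee (q j k) (q i k))"
    by (intro sum.cong refl sum.swap)
  also have "\<dots> \<le> (\<Sum>i\<in>{1..l}. \<Sum>j\<in>{1..l}-{i}. ?CA)"
  proof (rule sum_mono, rule sum_mono)
    fix i j assume i: "i \<in> {1..l}" and j: "j \<in> {1..l}-{i}"
    show "(\<Sum>k=0..n. ee (q j k) (q i k)) \<le> ?CA"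
      unfolding ee_def using sumA[where i=i and j=j and c="\<kappa> / 3" and n=n] i j kpos by (simp add: mult.assoc)
  qed
  also have "\<dots> \<le> (\<Sum>i\<in>{1..l}. real l * ?CA)"
  proof (rule sum_mono)
    fix i assume "i \<in> {1..l}"
    have "card ({1..l}-{i}) \<le> l" by (metis card_Diff1_le card_atLeastAtMost diff_Suc_1 finite_atLeastAtMost order.trans)
    then show "(\<Sum>j\<in>{1..l}-{i}. ?CA) \<le> real l * ?CA" using CA0 by (simp add: mult_right_mono)
  qed
  also have "\<dots> = real l * real l * ?CA" by simp
  finally show ?thesis .
qed

lemma sumH: "(\<Sum>k'=0..n. Hk k k') \<le> real l * real l * (real N0 + 2 / (1 - exp (- (\<kappa> / 3) / 2)))"
proof -
  let ?CB = "real N0 + 2 / (1 - exp (- (\<kappa> / 3) / 2))"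
  have "(\<Sum>k'=0..n. Hk k k') = (\<Sum>i\<in>{1..l}. \<Sum>k'=0..n. \<Sum>j\<in>{1..l}. ee (q j k') (q i k))"
    unfolding Hk_def by (rule sum.swap)
  also have "\<dots> = (\<Sum>i\<in>{1..l}. \<Sum>j\<in>{1..l}. \<Sum>k'=0..n. ee (q j k') (q i k))"
    by (intro sum.cong refl sum.swap)
  also have "\<dots> \<le> (\<Sum>i\<in>{1..l}. \<Sum>j\<in>{1..l}. ?CB)"
  proof (rule sum_mono, rule sum_mono)
    fix i j assume i: "i \<in> {1..l}" and j: "j \<in> {1..l}"
    show "(\<Sum>k'=0..n. ee (q j k') (q i k)) \<le> ?CB"
      unfolding ee_def using sumB[OF j, where c="\<kappa> / 3" and n=n and t="real (q i k)"] kpos by (simp add: mult.assoc)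
  qed
  also have "\<dots> = real l * real l * ?CB" by simp
  finally show ?thesis .
qed

lemma K4_nonneg: "0 \<le> K4" unfolding K4_def using Dnn KK_nonneg by simp

lemma main: "\<exists>C>0. \<forall>n\<ge>1. (\<integral>\<omega>. (\<Sum>k=0..n. Rk k \<omega>)\<^sup>2 \<partial>M) \<le> C * real n"
proof -
  define CA where "CA = real K1 + 1 / (1 - exp (- (\<kappa> / 3)))"
  define CB where "CB = real N0 + 2 / (1 - exp (- (\<kappa> / 3) / 2))"
  define K5 where "K5 = real l * (B ^ l * B ^ l * K4)"
  define C where "C = 2 * (K5 * (real l * real l * (CA + CB))) + 1"
  have K50: "0 \<le> K5" unfolding K5_def using B1 K4_nonneg by simp
  have CA0: "0 \<le> CA" unfolding CA_def using kpos by simp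
  have CB0: "0 \<le> CB" unfolding CB_def using kpos by simp
  have P0: "0 \<le> K5 * (real l * real l * (CA + CB))" using K50 CA0 CB0 by simp
  have "C > 0" unfolding C_def using P0 by simp
  moreover have "(\<integral>\<omega>. (\<Sum>k=0..n. Rk k \<omega>)\<^sup>2 \<partial>M) \<le> C * real n" if n1: "n \<ge> 1" for n
  proof -
    have sq: "(\<lambda>\<omega>. (\<Sum>k=0..n. Rk k \<omega>)\<^sup>2) = (\<lambda>\<omega>. \<Sum>k=0..n. \<Sum>k'=0..n. Rk k \<omega> * Rk k' \<omega>)"
      by (simp add: power2_eq_square sum_product)
    have "(\<integral>\<omega>. (\<Sum>k=0..n. Rk k \<omega>)\<^sup>2 \<partial>M) = (\<Sum>k=0..n. \<integral>\<omega>. (\<Sum>k'=0..n. Rk k \<omega> * Rk k' \<omega>) \<partial>M)"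
      unfolding sq by (rule Bochner_Integration.integral_sum) (intro Bochner_Integration.integrable_sum RR_int)
    also have "\<dots> = (\<Sum>k=0..n. \<Sum>k'=0..n. \<integral>\<omega>. Rk k \<omega> * Rk k' \<omega> \<partial>M)"
      by (intro sum.cong refl Bochner_Integration.integral_sum RR_int)
    finally have I: "(\<integral>\<omega>. (\<Sum>k=0..n. Rk k \<omega>)\<^sup>2 \<partial>M) = (\<Sum>k=0..n. \<Sum>k'=0..n. \<integral>\<omega>. Rk k \<omega> * Rk k' \<omega> \<partial>M)" .
    have b1: "(\<Sum>k=0..n. \<Sum>k'=0..n. \<integral>\<omega>. Rk k \<omega> * Rk k' \<omega> \<partial>M) \<le> (\<Sum>k=0..n. \<Sum>k'=0..n. K5 * (Gk k + Hk k k'))"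
    proof (rule sum_mono, rule sum_mono)
      fix k k'
      show "(\<integral>\<omega>. Rk k \<omega> * Rk k' \<omega> \<partial>M) \<le> K5 * (Gk k + Hk k k')"
        using RR_bound[of k k'] unfolding K5_def by (simp add: mult.assoc)
    qed
    have e1: "(\<Sum>k=0..n. \<Sum>k'=0..n. K5 * (Gk k + Hk k k')) = K5 * ((\<Sum>k=0..n. \<Sum>k'=0..n. Gk k) + (\<Sum>k=0..n. \<Sum>k'=0..n. Hk k k'))"
    proof -
      have "(\<Sum>k=0..n. \<Sum>k'=0..n. K5 * (Gk k + Hk k k')) = (\<Sum>k=0..n. \<Sum>k'=0..n. K5 * Gk k + K5 * Hk k k')"
        by (simp only: distrib_left)
      also have "\<dots> = (\<Sum>k=0..n. \<Sum>k'=0..n. K5 * Gk k) + (\<Sum>k=0..n. \<Sum>k'=0..n. K5 * Hk k k')"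
        by (simp only: sum.distrib)
      also have "\<dots> = K5 * (\<Sum>k=0..n. \<Sum>k'=0..n. Gk k) + K5 * (\<Sum>k=0..n. \<Sum>k'=0..n. Hk k k')"
        by (simp only: sum_distrib_left)
      also have "\<dots> = K5 * ((\<Sum>k=0..n. \<Sum>k'=0..n. Gk k) + (\<Sum>k=0..n. \<Sum>k'=0..n. Hk k k'))"
        by (simp only: distrib_left)
      finally show ?thesis .
    qed
    have g: "(\<Sum>k=0..n. \<Sum>k'=0..n. Gk k) \<le> real (n + 1) * (real l * real l * CA)"
    proof -
      have "(\<Sum>k=0..n. \<Sum>k'=0..n. Gk k) = real (n + 1) * (\<Sum>k=0..n. Gk k)"
        by (simp add: sum_distrib_left)
      also have "\<dots> \<le> real (n + 1) * (real l * real l * CA)"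
        using sumG[of n] unfolding CA_def by (intro mult_left_mono) auto
      finally show ?thesis .
    qed
    have h: "(\<Sum>k=0..n. \<Sum>k'=0..n. Hk k k') \<le> real (n + 1) * (real l * real l * CB)"
    proof -
      have "(\<Sum>k=0..n. \<Sum>k'=0..n. Hk k k') \<le> (\<Sum>k=0..n. real l * real l * CB)"
        using sumH unfolding CB_def by (intro sum_mono) auto
      also have "\<dots> = real (n + 1) * (real l * real l * CB)" by simp
      finally show ?thesis .
    qed
    have "K5 * ((\<Sum>k=0..n. \<Sum>k'=0..n. Gk k) + (\<Sum>k=0..n. \<Sum>k'=0..n. Hk k k'))
        \<le> K5 * (real (n + 1) * (real l * real l * CA) + real (n + 1) * (real l * real l * CB))"
      using g h K50 by (intro mult_left_mono) auto
    also have "\<dots> = real (n + 1) * (K5 * (real l * real l * (CA + CB)))" by (simp add: algebra_simps)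
    also have "\<dots> \<le> (2 * real n) * (K5 * (real l * real l * (CA + CB)))"
      using n1 P0 by (intro mult_right_mono) auto
    also have "\<dots> \<le> C * real n" unfolding C_def using n1 by (simp add: algebra_simps)
    finally show ?thesis using I b1 e1 by linarith
  qed
  ultimately show ?thesis by blast
qed

end

theorem lemma3p2:
  fixes M :: "'a measure" and l :: nat and X :: "nat \<Rightarrow> nat \<Rightarrow> 'a \<Rightarrow> real" and D :: real
    and F :: "ereal \<Rightarrow> ereal \<Rightarrow> 'a measure" and q :: "nat \<Rightarrow> nat \<Rightarrow> nat"
    and \<kappa> :: real and r p :: nat and \<gamma> n0 :: real
  assumes "prob_space M" and "l \<ge> 1"
    and "\<forall>j\<in>{1..l}. \<forall>n. X j n \<in> borel_measurable M"
    and "\<forall>j\<in>{1..l}. stationary M (X j)"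
    and "\<forall>j\<in>{1..l}. \<forall>n. AE \<omega> in M. \<bar>X j n \<omega>\<bar> \<le> D"
    and "\<forall>k\<in>ZInf. \<forall>k'\<in>ZInf. subalgebra M (F k k')"
    and "\<forall>k\<in>ZInf. \<forall>k'\<in>ZInf. \<forall>m\<in>ZInf. \<forall>m'\<in>ZInf.
           m' \<le> k \<and> k' \<le> m \<longrightarrow> sets (F k k') \<subseteq> sets (F m' m)"
    and C1: "\<kappa> > 0"
      "\<forall>n. mixing_alpha M F n + Max ((\<lambda>j. approx_beta M F (X j) n) ` {1..l})
              \<le> exp (- \<kappa> * real n) / \<kappa>"
    and C2: "r > 0" "\<forall>n. q 1 n = r * n + p"
    and C34: "0 < \<gamma>" "\<gamma> < 1" "n0 > 1"
      "\<forall>n. real n \<ge> n0 \<longrightarrow> (\<forall>j\<in>{2..l}. real (q j (n + 1)) \<ge> real (q j n) + real n powr \<gamma>)"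
      "\<forall>n. real n \<ge> n0 \<longrightarrow> (\<forall>j\<in>{1..l-1}.
           real (q (j + 1) (nat \<lfloor>real n powr (1 - \<gamma>)\<rfloor>)) \<ge> real (q j n) * real n powr \<gamma>)"
  shows "\<exists>C>0. \<forall>n\<ge>1. (\<integral>\<omega>. (\<Sum>k=0..n. (\<Prod>j=1..l. X j (q j k) \<omega>)
                                 - (\<Prod>j=1..l. \<integral>\<omega>'. X j 0 \<omega>' \<partial>M))\<^sup>2 \<partial>M) \<le> C * real n"
proof -
  have S: "S M l X D F q \<kappa> r p \<gamma> n0"
    by (rule S.intro; fact)
  interpret S M l X D F q \<kappa> r p \<gamma> n0 by (rule S)
  have eq: "Rk k \<omega> = (\<Prod>j=1..l. X j (q j k) \<omega>) - (\<Prod>j=1..l. \<integral>\<omega>'. X j 0 \<omega>' \<partial>M)" for k \<omega>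
    unfolding Rk_def a_def ..
  show ?thesis using main unfolding eq .
qed

end
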